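(* Let $q=3^m$ with $m\ge 4$. Then for every $i\in\{0,1,2\}$ there exists $x\in C_1$ such that $x^3-x=b^2$ for some $b\in\mathbb{F}_q^*$ with $\mathrm{Tr}_{\mathbb{F}_q/\mathbb{F}_3}(b)=i$.
   Context: $C_1$ denotes the set of non-squares in $\mathbb{F}_q^*$; $\mathrm{Tr}_{\mathbb{F}_q/\mathbb{F}_3}$ is the absolute trace. *)

theory Defs
  imports Main
begin

text \<open>Non-squares of the multiplicative group of a field (the set C_1).\<close>
definition nonsquares :: "'a::field set" where
  "nonsquares = {x. x \<noteq> 0 \<and> \<not> (\<exists>y. y ^ 2 = x)}"

definition abs_trace3 :: "nat \<Rightarrow> 'a::field \<Rightarrow> 'a" where
  "abs_trace3 m b = (\<Sum>k<m. b ^ (3 ^ k))"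

end

theory Submission
  imports Defs "HOL-Computational_Algebra.Polynomial" Complex_Main
begin

locale fld3 =
  fixes m :: nat
  assumes card3: "card (UNIV :: 'a::{field,finite} set) = 3^m" and m_pos: "m \<ge> 1"
begin

lemma three_zero: "(3::'a) = 0"
proof -
  have "(\<Sum>x::'a\<in>UNIV. x + 1) = (\<Sum>x\<in>UNIV. x)"
    by (rule sum.reindex_bij_witness[of _ "\<lambda>x. x - 1" "\<lambda>x. x + 1"]) auto
  then have "(\<Sum>x::'a\<in>UNIV. x) + of_nat (card (UNIV::'a set)) = (\<Sum>x\<in>UNIV. x)"
    by (simp add: sum.distrib)
  then have "(of_nat (3^m) :: 'a) = 0" using card3 by simp
  then have "(3::'a)^m = 0" by simp
  then show ?thesis by simp
qed

lemma two_ne: "(2::'a) \<noteq> 0"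
proof
  assume h: "(2::'a) = 0"
  have "(1::'a) = 3 - 2" by simp
  also have "\<dots> = 0" using three_zero \<open>(2::'a) = 0\<close> by simp
  finally show False by simp
qed

lemma two_eq: "(2::'a) = -1"
  using three_zero by (simp add: eq_neg_iff_add_eq_0)

lemma cube_add: "(x + y)^3 = x^3 + (y::'a)^3"
proof -
  have "(x+y)^3 = x^3 + y^3 + 3*(x^2*y + x*y^2)"
    by (simp add: power3_eq_cube power2_eq_square algebra_simps)
  then show ?thesis using three_zero by simp
qed

lemma frob_add: "(x + y)^(3^k) = x^(3^k) + (y::'a)^(3^k)"
proof (induction k)
  case 0 then show ?case by simp
next
  case (Suc k)
  have "(x + y)^(3^Suc k) = ((x+y)^(3^k))^3" by (simp add: power_mult[symmetric] mult.commute)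
  also have "\<dots> = (x^(3^k))^3 + (y^(3^k))^3" using Suc cube_add by simp
  also have "\<dots> = x^(3^Suc k) + y^(3^Suc k)" by (simp add: power_mult[symmetric] mult.commute)
  finally show ?case .
qed

lemma frob_neg: "(- x)^(3^k) = - ((x::'a)^(3^k))"
  by (simp add: power_minus_odd)

lemma frob_sum: "(\<Sum>k\<in>A. f k)^(3^j) = (\<Sum>k\<in>A. (f k :: 'a)^(3^j))"
proof (induction A rule: infinite_finite_induct)
  case (infinite A) then show ?case by simp
next
  case empty then show ?case by simp
next
  case (insert a A) then show ?case by (simp add: frob_add)
qed

lemma unit_pow: assumes "(a::'a) \<noteq> 0" shows "a^(card (UNIV::'a set) - 1) = 1"
proof -
  let ?U = "- {0::'a}"
  have "(\<Prod>x\<in>?U. a * x) = (\<Prod>x\<in>?U. x)"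
    by (rule prod.reindex_bij_witness[of _ "\<lambda>x. x / a" "\<lambda>x. a * x"]) (use assms in auto)
  moreover have "(\<Prod>x\<in>?U. a * x) = a^card ?U * (\<Prod>x\<in>?U. x)"
    by (simp add: prod.distrib)
  moreover have "(\<Prod>x\<in>?U. x) \<noteq> 0" by simp
  ultimately have "a^card ?U = 1" by simp
  moreover have "card ?U = card (UNIV::'a set) - 1"
    by (simp add: Compl_eq_Diff_UNIV card_Diff_singleton)
  ultimately show ?thesis by simp
qed

lemma fermat: "(x::'a)^(3^m) = x"
proof (cases "x = 0")
  case True then show ?thesis using m_pos by simp
next
  case False
  have "(3::nat)^m \<ge> 1" by simp
  then have "x^(3^m) = x * x^(3^m - 1)"
    by (metis One_nat_def Suc_diff_le diff_Suc_1 power_Suc)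
  also have "\<dots> = x" using unit_pow[OF False] card3 by simp
  finally show ?thesis .
qed

abbreviation tr where "tr \<equiv> abs_trace3 m"

lemma tr_add: "tr (x + y) = tr x + tr (y::'a)"
  by (simp add: abs_trace3_def frob_add sum.distrib)

lemma tr_neg: "tr (- x) = - tr (x::'a)"
  by (simp add: abs_trace3_def frob_neg sum_negf)

lemma tr_diff: "tr (x - y) = tr x - tr (y::'a)"
  using tr_add[of x "-y"] tr_neg[of y] by simp

lemma tr_zero: "tr (0::'a) = 0"
  using m_pos by (simp add: abs_trace3_def power_0_left)

lemma tr_cube: "tr ((x::'a)^3) = tr x"
proof -
  have "tr (x^3) = (\<Sum>k<m. x^(3^Suc k))"
    by (simp add: abs_trace3_def power_mult[symmetric] mult.commute)
  moreover have "(\<Sum>k<Suc m. x^(3^k)) = x + (\<Sum>k<m. x^(3^Suc k))"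
    by (subst sum.lessThan_Suc_shift) simp
  moreover have "(\<Sum>k<Suc m. x^(3^k)) = tr x + x"
    by (simp add: abs_trace3_def fermat)
  ultimately show ?thesis by (simp add: add.commute)
qed

lemma tr_frob: "tr ((x::'a)^(3^k)) = tr x"
proof (induction k)
  case 0 then show ?case by simp
next
  case (Suc k)
  have "x^(3^Suc k) = (x^(3^k))^3" by (simp add: power_mult[symmetric] mult.commute)
  then show ?case using Suc tr_cube by simp
qed

lemma tr_cubed: "(tr (x::'a))^3 = tr x"
proof -
  have "(tr x)^3 = (tr x)^(3^1)" by simp
  also have "\<dots> = tr (x^3)"
    unfolding abs_trace3_def frob_sum
    by (simp add: power_mult[symmetric] mult.commute)
  finally show ?thesis using tr_cube by simp
qed

lemma F3_cases: assumes "(t::'a)^3 = t" shows "t = 0 \<or> t = 1 \<or> t = -1"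
proof -
  have "t * (t - 1) * (t + 1) = t^3 - t" by (simp add: power3_eq_cube algebra_simps)
  then have "t * (t - 1) * (t + 1) = 0" using assms by simp
  then show ?thesis by (auto simp: eq_neg_iff_add_eq_0)
qed

lemma tr_cases: "tr (x::'a) = 0 \<or> tr x = 1 \<or> tr x = -1"
  using F3_cases tr_cubed by blast

lemma F3_frob: assumes "(c::'a)^3 = c" shows "c^(3^k) = c"
proof (induction k)
  case 0 then show ?case by simp
next
  case (Suc k)
  have "c^(3^Suc k) = (c^(3^k))^3" by (simp add: power_mult[symmetric] mult.commute)
  then show ?case using Suc assms by simp
qed

lemma tr_scal: assumes "(c::'a)^3 = c" shows "tr (c * x) = c * tr x"
  by (simp add: abs_trace3_def power_mult_distrib F3_frob[OF assms] sum_distrib_left)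

lemma tr_nonzero_exists: "\<exists>x::'a. tr x \<noteq> 0"
proof (rule ccontr)
  assume "\<not> ?thesis"
  then have all0: "\<And>x. tr (x::'a) = 0" by blast
  define p :: "'a poly" where "p = (\<Sum>k<m. monom 1 (3^k))"
  have pe: "poly p x = tr x" for x by (simp add: p_def poly_sum poly_monom abs_trace3_def)
  have "coeff p 1 = (\<Sum>k<m. if 3^k = (1::nat) then 1 else 0)"
    by (simp add: p_def coeff_sum coeff_monom)
  also have "\<dots> = (\<Sum>k<m. if k = 0 then (1::'a) else 0)"
    by (rule sum.cong) auto
  also have "\<dots> = 1" using m_pos by (simp add: sum.delta')
  finally have "coeff p 1 = 1" .
  then have pnz: "p \<noteq> 0" by auto
  have dg: "degree p \<le> 3^(m-1)"
    unfolding p_def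
    by (rule degree_sum_le) (auto intro!: order.trans[OF degree_monom_le] power_increasing)
  have "card {x. poly p x = 0} \<le> degree p" by (rule card_poly_roots_bound[OF pnz])
  moreover have "{x. poly p x = 0} = UNIV" using pe all0 by auto
  ultimately have "card (UNIV::'a set) \<le> degree p" by simp
  then have "(3::nat)^m \<le> 3^(m-1)" using card3 dg by linarith
  moreover have "(3::nat)^(m-1) < 3^m" using m_pos by simp
  ultimately show False by linarith
qed

end

definition om :: complex where "om = Complex (-1/2) (sqrt 3/2)"

lemma om_sq: "om^2 = cnj om"
  by (simp add: om_def power2_eq_square complex_eq_iff algebra_simps)

lemma om_cube: "om^3 = 1"
proof -
  have "om^3 = om * om^2" by (simp add: power3_eq_cube power2_eq_square)
  also have "\<dots> = om * cnj om" by (simp add: om_sq)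
  also have "\<dots> = 1" by (simp add: om_def complex_eq_iff power2_eq_square)
  finally show ?thesis .
qed

lemma om_sum: "1 + om + om^2 = 0"
proof -
  have "1 + om + om^2 = 1 + om + cnj om" by (simp add: om_sq)
  also have "\<dots> = 0" by (simp add: om_def complex_eq_iff)
  finally show ?thesis .
qed

lemma om_ne1: "om \<noteq> 1" by (simp add: om_def complex_eq_iff)
lemma om2_ne1: "om^2 \<noteq> 1" unfolding om_sq by (simp add: om_def complex_eq_iff)
lemma om_om2: "om * om^2 = 1" using om_cube by (simp add: power3_eq_cube power2_eq_square mult.assoc)
lemma om2_om: "om^2 * om = 1" using om_om2 by (simp add: mult.commute)
lemma om_om: "om * om = om^2" by (simp add: power2_eq_square)
lemma om_4: "om^4 = om"
proof -
  have "om^4 = om^3 * om" using power_add[of om 3 1] by simp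
  then show ?thesis using om_cube by simp
qed
lemma om_norm: "cmod om = 1"
  by (simp add: om_def cmod_def power2_eq_square)
lemma om_cnj2: "cnj (om^2) = om"
  using om_cube om_sq by (metis complex_cnj_cnj)
lemma om4: "om^2 * om^2 = om"
proof -
  have "om^2 * om^2 = om^3 * om" by (simp add: power2_eq_square power3_eq_cube)
  then show ?thesis using om_cube by simp
qed

definition ee :: "'a::field \<Rightarrow> complex" where
  "ee t = (if t = 0 then 1 else if t = 1 then om else om^2)"

definition psi :: "nat \<Rightarrow> 'a::field \<Rightarrow> complex" where
  "psi m x = ee (abs_trace3 m x)"

context fld3
begin

definition S3 :: "'a set" where "S3 = {0, 1, -1}"

lemma one_ne_m1: "(1::'a) \<noteq> -1"
  using two_ne by (metis add_eq_0_iff2 one_add_one)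

lemma m1_ne0: "(-1::'a) \<noteq> 0" by simp

lemma ee_0: "ee (0::'a) = 1" by (simp add: ee_def)
lemma ee_1: "ee (1::'a) = om" by (simp add: ee_def)
lemma ee_m1: "ee (-1::'a) = om^2" using one_ne_m1 by (simp add: ee_def)

lemma in_F3: "(t::'a)^3 = t \<longleftrightarrow> t \<in> S3"
proof
  assume "t^3 = t" then show "t \<in> S3" using F3_cases by (auto simp: S3_def)
next
  assume "t \<in> S3" then show "t^3 = t" by (auto simp: S3_def)
qed

lemma S3_cases: "t \<in> S3 \<Longrightarrow> (t = 0 \<Longrightarrow> P) \<Longrightarrow> (t = 1 \<Longrightarrow> P) \<Longrightarrow> (t = -1 \<Longrightarrow> P) \<Longrightarrow> P"
  by (auto simp: S3_def)

lemma one_one: "(1::'a) + 1 = -1" using two_eq by simp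
lemma m1_m1: "(-1::'a) + -1 = 1"
proof -
  have "(-1::'a) + -1 = - 2" by simp
  then show ?thesis using two_eq by simp
qed

lemma S3_add: "s \<in> S3 \<Longrightarrow> t \<in> S3 \<Longrightarrow> s + t \<in> S3"
  by (auto simp: S3_def two_eq)
lemma S3_neg: "s \<in> S3 \<Longrightarrow> - s \<in> S3"
  by (auto simp: S3_def)
lemma S3_mult: "s \<in> S3 \<Longrightarrow> t \<in> S3 \<Longrightarrow> s * t \<in> S3"
  by (auto simp: S3_def)
lemma S3_diff: "s \<in> S3 \<Longrightarrow> t \<in> S3 \<Longrightarrow> s - t \<in> S3"
  using S3_add S3_neg by (metis diff_conv_add_uminus)

lemma tr_S3: "tr (x::'a) \<in> S3"
  using tr_cases by (auto simp: S3_def)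

lemma ee_add: assumes "s \<in> S3" "t \<in> S3" shows "ee (s + t) = ee s * ee (t::'a)"
  using assms
  by (auto simp: S3_def ee_0 ee_1 ee_m1 two_eq om_om2 om2_om om4 om_om om_4)

lemma ee_neg: assumes "t \<in> S3" shows "ee (- t) = cnj (ee (t::'a))"
  using assms by (auto simp: S3_def ee_0 ee_1 ee_m1 om_sq om_cnj2)

lemma ee_norm: assumes "t \<in> S3" shows "cmod (ee (t::'a)) = 1"
  using assms by (auto simp: S3_def ee_0 ee_1 ee_m1 om_norm norm_power)

abbreviation \<psi> where "\<psi> \<equiv> (psi m :: 'a \<Rightarrow> complex)"

lemma psi_add: "\<psi> (x + y) = \<psi> x * \<psi> y"
  by (simp add: psi_def tr_add ee_add tr_S3)

lemma psi_zero: "\<psi> 0 = 1" by (simp add: psi_def tr_zero ee_0)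

lemma psi_neg: "\<psi> (- x) = cnj (\<psi> x)"
  by (simp add: psi_def tr_neg ee_neg tr_S3)

lemma psi_diff: "\<psi> (x - y) = \<psi> x * cnj (\<psi> y)"
  using psi_add[of x "-y"] psi_neg[of y] by simp

lemma psi_norm: "cmod (\<psi> x) = 1" by (simp add: psi_def ee_norm tr_S3)

lemma psi_cnj_mult: "\<psi> x * cnj (\<psi> x) = 1"
  using psi_norm[of x] by (metis complex_norm_square mult.commute of_real_1 power_one)

lemma psi_ne0: "\<psi> x \<noteq> 0" using psi_norm[of x] by auto

lemma psi_frob: "\<psi> (x^(3^k)) = \<psi> x" by (simp add: psi_def tr_frob)
lemma psi_cube: "\<psi> (x^3) = \<psi> x" by (simp add: psi_def tr_cube)

lemma psi_orth: "(\<Sum>x\<in>UNIV. \<psi> (l * x)) = (if l = 0 then of_nat (card (UNIV::'a set)) else 0)"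
proof (cases "l = 0")
  case True then show ?thesis by (simp add: psi_zero)
next
  case False
  obtain x0 :: 'a where x0: "tr x0 \<noteq> 0" using tr_nonzero_exists by blast
  have ne: "\<psi> x0 \<noteq> 1"
    using x0 tr_S3[of x0] ee_1 ee_m1 om_ne1 om2_ne1 by (auto simp: psi_def S3_def)
  let ?y = "x0 / l"
  have "(\<Sum>x\<in>UNIV. \<psi> (l * x)) = (\<Sum>x\<in>UNIV. \<psi> (l * (x + ?y)))"
    by (rule sum.reindex_bij_witness[of _ "\<lambda>x. x + ?y" "\<lambda>x. x - ?y"]) auto
  also have "\<dots> = (\<Sum>x\<in>UNIV. \<psi> (l * x) * \<psi> x0)"
    using False by (simp add: distrib_left psi_add)
  also have "\<dots> = (\<Sum>x\<in>UNIV. \<psi> (l * x)) * \<psi> x0" by (simp add: sum_distrib_right)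
  finally have "(\<Sum>x\<in>UNIV. \<psi> (l * x)) * (1 - \<psi> x0) = 0" by (simp add: algebra_simps)
  then show ?thesis using ne False by simp
qed

lemma psi_orth_nz: "l \<noteq> 0 \<Longrightarrow> (\<Sum>x\<in>UNIV. \<psi> (l * x)) = 0"
  using psi_orth by simp

lemma ee_sum_S3: assumes "t \<in> S3" shows "(\<Sum>s\<in>S3. ee (s * t)) = (if t = 0 then 3 else 0)"
proof -
  have "(\<Sum>s\<in>S3. ee (s * t)) = ee (0::'a) + ee t + ee (- t)"
    using one_ne_m1 by (simp add: S3_def)
  also have "\<dots> = 1 + ee t + cnj (ee t)" using ee_neg[OF assms] ee_0 by simp
  finally show ?thesis using assms om_sum
    by (auto simp: S3_def ee_0 ee_1 ee_m1 om_sq om_cnj2 algebra_simps)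
qed

lemma psi_S3: "s \<in> S3 \<Longrightarrow> \<psi> (s * b) = ee (s * tr b)"
  by (simp add: psi_def tr_scal in_F3[symmetric])

lemma indicator_tr: assumes "i \<in> S3"
  shows "(if tr b = i then 1 else 0) = (1/3) * (\<Sum>s\<in>S3. \<psi> (s * b) * ee (- (s * i)))"
proof -
  have "(\<Sum>s\<in>S3. \<psi> (s * b) * ee (- (s * i))) = (\<Sum>s\<in>S3. ee (s * (tr b - i)))"
  proof (rule sum.cong)
    fix s assume s: "s \<in> S3"
    have "ee (s * (tr b - i)) = ee (s * tr b + - (s * i))" by (simp add: algebra_simps)
    also have "\<dots> = ee (s * tr b) * ee (- (s * i))"
      by (rule ee_add) (use s assms tr_S3 S3_mult S3_neg in auto)
    finally show "\<psi> (s * b) * ee (- (s * i)) = ee (s * (tr b - i))" using psi_S3[OF s] by simp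
  qed simp
  also have "\<dots> = (if tr b - i = 0 then 3 else 0)"
    by (rule ee_sum_S3) (use assms tr_S3 S3_diff in auto)
  finally show ?thesis by simp
qed

end

definition chi :: "'a::field \<Rightarrow> complex" where
  "chi x = (if x = 0 then 0 else if (\<exists>y. y^2 = x) then 1 else -1)"

definition sqs :: "'a::field set" where "sqs = {x. x \<noteq> 0 \<and> (\<exists>y. y^2 = x)}"

context fld3
begin


lemma fiber_sq: assumes "(y::'a) \<in> sqs" shows "card {b. b^2 = y} = 2"
proof -
  obtain b0 where b0: "b0^2 = y" "y \<noteq> 0" using assms by (auto simp: sqs_def)
  then have "b0 \<noteq> 0" by auto
  then have "b0 \<noteq> - b0" using two_ne by (metis add_eq_0_iff2 mult_2 mult_eq_0_iff)
  moreover have "{b. b^2 = y} = {b0, -b0}" using b0 by (auto simp: power2_eq_iff)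
  ultimately show ?thesis by simp
qed

lemma fiber_0: "card {b::'a. b^2 = 0} = 1"
proof -
  have "{b::'a. b^2 = 0} = {0}" by auto
  then show ?thesis by simp
qed

lemma fiber_nsq: assumes "(y::'a) \<noteq> 0" "y \<notin> sqs" shows "card {b. b^2 = y} = 0"
proof -
  have "{b. b^2 = y} = {}" using assms by (auto simp: sqs_def)
  then show ?thesis by simp
qed

lemma fiber_chi: "of_nat (card {b::'a. b^2 = y}) = 1 + chi y"
  using fiber_sq[of y] fiber_0 fiber_nsq[of y] by (auto simp: chi_def sqs_def)

lemma card_sqs: "2 * card (sqs::'a set) = card (UNIV::'a set) - 1"
proof -
  have sub: "(\<lambda>x. x^2) ` (-{0::'a}) \<subseteq> sqs" by (auto simp: sqs_def)
  have "card (- {0::'a}) = (\<Sum>y\<in>sqs. card {x. x \<in> - {0::'a} \<and> x^2 = y})"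
    using sum.group[OF finite finite sub, of "\<lambda>_. 1::nat"] by simp
  also have "\<dots> = (\<Sum>y\<in>sqs. card {x::'a. x^2 = y})"
    by (rule sum.cong) (auto simp: sqs_def intro!: arg_cong[where f=card])
  also have "\<dots> = (\<Sum>y\<in>(sqs::'a set). 2)" by (rule sum.cong) (auto simp: fiber_sq)
  finally have "card (- {0::'a}) = 2 * card (sqs::'a set)" by simp
  moreover have "card (- {0::'a}) = card (UNIV::'a set) - 1"
    by (simp add: Compl_eq_Diff_UNIV card_Diff_singleton)
  ultimately show ?thesis by simp
qed

lemma nonsq_eq: "(nonsquares::'a set) = - {0} - sqs"
  by (auto simp: nonsquares_def sqs_def)

lemma card_nonsq: "card (nonsquares::'a set) = card (sqs::'a set)"
proof -
  have "card (nonsquares::'a set) = card (- {0::'a}) - card (sqs::'a set)"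
    unfolding nonsq_eq by (rule card_Diff_subset) (auto simp: sqs_def)
  moreover have "card (- {0::'a}) = card (UNIV::'a set) - 1"
    by (simp add: Compl_eq_Diff_UNIV card_Diff_singleton)
  ultimately show ?thesis using card_sqs by simp
qed

lemma chi_sum: "(\<Sum>x\<in>UNIV. chi (x::'a)) = 0"
proof -
  have "(\<Sum>x\<in>UNIV. chi (x::'a)) = (\<Sum>x\<in>UNIV. of_bool ((x::'a) \<in> sqs) - of_bool (x \<in> nonsquares))"
    by (rule sum.cong) (auto simp: chi_def sqs_def nonsquares_def)
  also have "\<dots> = of_nat (card (sqs::'a set)) - of_nat (card (nonsquares::'a set))"
    by (simp add: sum_subtractf)
  finally show ?thesis using card_nonsq by simp
qed

lemma nonsq_mult_sq: assumes "x \<in> nonsquares" "s \<in> sqs" shows "(x::'a) * s \<in> nonsquares"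
proof -
  obtain c where c: "c^2 = s" "s \<noteq> 0" using assms by (auto simp: sqs_def)
  have "x \<noteq> 0" using assms by (auto simp: nonsquares_def)
  moreover have "\<not> (\<exists>y. y^2 = x * s)"
  proof
    assume "\<exists>y. y^2 = x * s"
    then obtain y where "y^2 = x * s" by blast
    then have "(y / c)^2 = x" using c by (auto simp: power_divide)
    then show False using assms by (auto simp: nonsquares_def)
  qed
  ultimately show ?thesis using c by (auto simp: nonsquares_def)
qed

lemma nonsq_nonsq: assumes "x \<in> nonsquares" "y \<in> nonsquares" shows "(x::'a) * y \<in> sqs"
proof -
  have "(\<lambda>s. x * s) ` sqs \<subseteq> nonsquares" using nonsq_mult_sq[OF assms(1)] by auto
  moreover have "card ((\<lambda>s. x * s) ` sqs) = card (sqs::'a set)"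
    by (rule card_image) (use assms in \<open>auto simp: inj_on_def nonsquares_def\<close>)
  ultimately have "(\<lambda>s. x * s) ` sqs = nonsquares"
    using card_nonsq by (intro card_subset_eq) auto
  then obtain s where s: "s \<in> sqs" "y = x * s" using assms by auto
  then obtain c where c: "c^2 = s" by (auto simp: sqs_def)
  have "x * y = (x * c)^2" using s c by (simp add: power2_eq_square)
  moreover have "x * y \<noteq> 0" using assms by (auto simp: nonsquares_def)
  ultimately show ?thesis by (auto simp: sqs_def)
qed

lemma sq_sq: assumes "x \<in> sqs" "y \<in> sqs" shows "(x::'a) * y \<in> sqs"
proof -
  obtain a b where "a^2 = x" "b^2 = y" using assms by (auto simp: sqs_def)
  then have "x * y = (a*b)^2" by (simp add: power_mult_distrib)
  then show ?thesis using assms by (auto simp: sqs_def)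
qed

lemma trichotomy: "(x::'a) = 0 \<or> x \<in> sqs \<or> x \<in> nonsquares"
  by (auto simp: sqs_def nonsquares_def)

lemma chi_sqs: "x \<in> sqs \<Longrightarrow> chi x = 1" by (auto simp: chi_def sqs_def)
lemma chi_nonsq: "x \<in> nonsquares \<Longrightarrow> chi x = -1" by (auto simp: chi_def nonsquares_def)
lemma chi_0: "chi 0 = 0" by (simp add: chi_def)

lemma chi_mult: "chi ((x::'a) * y) = chi x * chi y"
proof -
  have "x = 0 \<or> x \<in> sqs \<or> x \<in> nonsquares" "y = 0 \<or> y \<in> sqs \<or> y \<in> nonsquares"
    using trichotomy by auto
  then show ?thesis
    using nonsq_nonsq[of x y] nonsq_mult_sq[of x y] nonsq_mult_sq[of y x] sq_sq[of x y]
    by (auto simp: chi_sqs chi_nonsq chi_0 mult.commute)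
qed

lemma chi_sq1: "(x::'a) \<noteq> 0 \<Longrightarrow> chi x * chi x = 1"
  using trichotomy[of x] by (auto simp: chi_sqs chi_nonsq)

lemma chi_1: "chi (1::'a) = 1" by (simp add: chi_def exI[of _ 1])

lemma chi_inv: "chi (inverse (x::'a)) = chi x"
proof (cases "x = 0")
  case True then show ?thesis by simp
next
  case False
  have "chi x * chi (inverse x) = 1" using chi_mult[of x "inverse x"] False chi_1 by simp
  then show ?thesis using chi_sq1[OF False] by (metis mult.commute mult.left_neutral mult.assoc)
qed

lemma chi_cnj: "cnj (chi x) = chi x" by (simp add: chi_def)

lemma chi_sqmult: "(c::'a) \<noteq> 0 \<Longrightarrow> chi (c^2 * y) = chi y"
  by (simp add: chi_mult power2_eq_square chi_sq1)

lemma chi_norm: "cmod (chi x) \<le> 1" by (simp add: chi_def)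

abbreviation \<chi> where "\<chi> \<equiv> (chi :: 'a \<Rightarrow> complex)"

definition G :: complex where "G = (\<Sum>x\<in>UNIV. \<chi> x * \<psi> x)"

lemma gauss_lin: "(\<Sum>x\<in>UNIV. \<chi> x * \<psi> (l * x)) = \<chi> l * G"
proof (cases "l = 0")
  case True then show ?thesis by (simp add: psi_zero chi_sum chi_0)
next
  case False
  have "(\<Sum>x\<in>UNIV. \<chi> x * \<psi> (l * x)) = (\<Sum>y\<in>UNIV. \<chi> (y / l) * \<psi> y)"
    by (rule sum.reindex_bij_witness[of _ "\<lambda>y. y / l" "\<lambda>x. l * x"]) (use False in auto)
  also have "\<dots> = (\<Sum>y\<in>UNIV. \<chi> l * (\<chi> y * \<psi> y))"
    by (rule sum.cong) (auto simp: divide_inverse chi_mult chi_inv)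
  finally show ?thesis by (simp add: G_def sum_distrib_left)
qed

lemma G_cnj: "cnj G = \<chi> (-1) * G"
proof -
  have "cnj G = (\<Sum>x\<in>UNIV. \<chi> x * \<psi> ((-1) * x))"
    by (simp add: G_def chi_cnj psi_neg)
  then show ?thesis using gauss_lin[of "-1"] by simp
qed

lemma psi_orth_punct: "(\<Sum>y\<in>-{0}. \<psi> (c * y)) = (if c = 0 then of_nat (card (UNIV::'a set)) - 1 else -1)"
proof -
  have "(\<Sum>y\<in>UNIV. \<psi> (c * y)) = \<psi> (c * 0) + (\<Sum>y\<in>-{0}. \<psi> (c * y))"
    by (metis Compl_eq_Diff_UNIV finite sum.remove UNIV_I)
  then have "(\<Sum>y\<in>-{0}. \<psi> (c * y)) = (\<Sum>y\<in>UNIV. \<psi> (c * y)) - 1"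
    using psi_zero by (simp add: algebra_simps)
  then show ?thesis using psi_orth[of c] by simp
qed

lemma G_norm: "G * cnj G = of_nat (card (UNIV::'a set))"
proof -
  have "G * cnj G = (\<Sum>x\<in>UNIV. \<Sum>y\<in>UNIV. \<chi> x * \<psi> x * (\<chi> y * cnj (\<psi> y)))"
    by (simp add: G_def sum_product chi_cnj cnj_sum)
  also have "\<dots> = (\<Sum>x\<in>UNIV. \<Sum>y\<in>UNIV. \<chi> x * \<chi> y * \<psi> (x - y))"
    by (simp add: psi_diff mult_ac)
  also have "\<dots> = (\<Sum>y\<in>UNIV. \<Sum>x\<in>UNIV. \<chi> x * \<chi> y * \<psi> (x - y))"
    by (rule sum.swap)
  also have "\<dots> = (\<Sum>y\<in>-{0}. \<Sum>x\<in>UNIV. \<chi> x * \<chi> y * \<psi> (x - y))"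
    by (rule sum.mono_neutral_right) (auto simp: chi_0)
  also have "\<dots> = (\<Sum>y\<in>-{0}. \<Sum>t\<in>UNIV. \<chi> t * \<psi> ((t - 1) * y))"
  proof (rule sum.cong)
    fix y :: 'a assume y: "y \<in> -{0}"
    then have y0: "y \<noteq> 0" by simp
    show "(\<Sum>x\<in>UNIV. \<chi> x * \<chi> y * \<psi> (x - y)) = (\<Sum>t\<in>UNIV. \<chi> t * \<psi> ((t - 1) * y))"
    proof (rule sum.reindex_bij_witness[of _ "\<lambda>t. t * y" "\<lambda>x. x / y"])
      fix a :: 'a
      have "\<chi> (a / y) = \<chi> a * \<chi> y" by (simp add: divide_inverse chi_mult chi_inv)
      moreover have "(a / y - 1) * y = a - y" using y0 by (simp add: field_simps)
      ultimately show "\<chi> (a / y) * \<psi> ((a / y - 1) * y) = \<chi> a * \<chi> y * \<psi> (a - y)"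
        by simp
    qed (use y0 in auto)
  qed simp
  also have "\<dots> = (\<Sum>t\<in>UNIV. \<chi> t * (\<Sum>y\<in>-{0}. \<psi> ((t - 1) * y)))"
    by (subst sum.swap) (simp add: sum_distrib_left)
  also have "\<dots> = (\<Sum>t\<in>UNIV. \<chi> t * (if t = 1 then of_nat (card (UNIV::'a set)) else 0) - \<chi> t)"
  proof (rule sum.cong)
    fix t :: 'a
    show "\<chi> t * (\<Sum>y\<in>-{0}. \<psi> ((t - 1) * y)) = \<chi> t * (if t = 1 then of_nat (card (UNIV::'a set)) else 0) - \<chi> t"
      using psi_orth_punct[of "t - 1"] by (cases "t = 1") (simp_all add: algebra_simps psi_zero chi_1)
  qed simp
  also have "\<dots> = (\<Sum>t\<in>UNIV. \<chi> t * (if t = 1 then of_nat (card (UNIV::'a set)) else 0)) - (\<Sum>t\<in>UNIV. \<chi> t)"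
    by (rule sum_subtractf)
  also have "(\<Sum>t\<in>UNIV. \<chi> t * (if t = 1 then of_nat (card (UNIV::'a set)) else 0))
     = (\<Sum>t\<in>UNIV. if (t::'a) = 1 then \<chi> 1 * of_nat (card (UNIV::'a set)) else 0)"
    by (rule sum.cong) auto
  also have "\<dots> = of_nat (card (UNIV::'a set))" by (simp add: chi_1)
  finally show ?thesis using chi_sum by simp
qed

lemma G_sq: "G^2 = \<chi> (-1) * of_nat (card (UNIV::'a set))"
proof -
  have "\<chi> (-1) * \<chi> (-1) = 1" by (rule chi_sq1) simp
  moreover have "G * (\<chi> (-1) * G) = of_nat (card (UNIV::'a set))" using G_norm G_cnj by simp
  ultimately show ?thesis
    by (metis (no_types, lifting) mult.assoc mult.commute mult.left_neutral power2_eq_square)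
qed

lemma G_ne0: "G \<noteq> 0"
  using G_norm by auto

lemma sum_sq: "(\<Sum>b\<in>UNIV. f ((b::'a)^2)) = (\<Sum>y\<in>UNIV. (1 + \<chi> y) * f y)"
proof -
  have "(\<Sum>b\<in>UNIV. f ((b::'a)^2)) = (\<Sum>y\<in>UNIV. \<Sum>b\<in>{b. b \<in> UNIV \<and> b^2 = y}. f (b^2))"
    by (rule sum.group[symmetric]) auto
  also have "\<dots> = (\<Sum>y\<in>UNIV. of_nat (card {b::'a. b^2 = y}) * f y)"
    by (rule sum.cong) auto
  finally show ?thesis by (simp add: fiber_chi)
qed

lemma gauss_quad0: assumes "a \<noteq> 0" shows "(\<Sum>b\<in>UNIV. \<psi> (a * b^2)) = \<chi> a * G"
proof -
  have "(\<Sum>b\<in>UNIV. \<psi> (a * b^2)) = (\<Sum>y\<in>UNIV. (1 + \<chi> y) * \<psi> (a * y))"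
    by (rule sum_sq)
  also have "\<dots> = (\<Sum>y\<in>UNIV. \<psi> (a * y)) + (\<Sum>y\<in>UNIV. \<chi> y * \<psi> (a * y))"
    by (simp add: distrib_right sum.distrib)
  finally show ?thesis using psi_orth_nz[OF assms] gauss_lin by simp
qed

lemma gauss_quad: assumes "a \<noteq> 0"
  shows "(\<Sum>b\<in>UNIV. \<psi> (a * b^2 + c * b)) = \<chi> a * G * \<psi> (- (c^2 / a))"
proof -
  let ?d = "c / a"
  have id: "a * b^2 + c * b = a * (b - ?d)^2 + - (c^2 / a)" for b
  proof -
    have "a * (b - ?d)^2 = a * b^2 - 2 * c * b + c^2 / a"
      using assms by (simp add: power2_eq_square field_simps)
    then show ?thesis using two_eq by simp
  qed
  have "(\<Sum>b\<in>UNIV. \<psi> (a * b^2 + c * b)) = (\<Sum>b\<in>UNIV. \<psi> (a * (b - ?d)^2) * \<psi> (- (c^2 / a)))"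
    by (simp add: id psi_add psi_diff psi_neg)
  also have "\<dots> = (\<Sum>b\<in>UNIV. \<psi> (a * b^2)) * \<psi> (- (c^2 / a))"
    by (subst sum_distrib_right, rule sum.reindex_bij_witness[of _ "\<lambda>b. b + ?d" "\<lambda>b. b - ?d"]) auto
  finally show ?thesis using gauss_quad0[OF assms] by simp
qed

lemma G_norm_sq: "cmod G ^ 2 = real (card (UNIV::'a set))"
proof -
  have "complex_of_real (cmod G ^ 2) = G * cnj G" by (rule complex_norm_square)
  then show ?thesis using G_norm by (metis of_real_eq_iff of_real_of_nat_eq)
qed

lemma chi_inv_formula: "\<chi> z = (1 / G) * (\<Sum>w\<in>UNIV. \<chi> w * \<psi> (w * z))"
proof -
  have "(\<Sum>w\<in>UNIV. \<chi> w * \<psi> (w * z)) = \<chi> z * G"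
    using gauss_lin[of z] by (simp add: mult.commute)
  then show ?thesis using G_ne0 by simp
qed

end

context fld3
begin

definition Lf :: "'a \<Rightarrow> 'a" where "Lf x = x^3 - x"
definition fr :: "'a \<Rightarrow> 'a" where "fr a = a^(3^(m-1))"

lemma pow3m: "(3::nat)^(m-1) * 3 = 3^m"
  using m_pos by (metis Suc_diff_1 less_le_trans less_one not_le power_Suc2 zero_less_one)

lemma pow3m_a: "(3::nat)^(m - Suc 0) * 3 = 3^m" using m_pos by (cases m) auto
lemma pow3m_b: "3 * (3::nat)^(m - Suc 0) = 3^m" using m_pos by (cases m) auto

lemma fr_cube: "(fr a)^3 = a"
  unfolding fr_def by (simp add: power_mult[symmetric] pow3m_a fermat)

lemma fr_of_cube: "fr (u^3) = u"
  unfolding fr_def by (simp add: power_mult[symmetric] pow3m_b fermat)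

lemma aux_c: "(g::complex) * ((1/n) * A) * ((1/3) * B) = (1/(3*n)) * ((g*A)*B)"
  by (simp add: field_simps)

lemma fr_0: "fr 0 = 0" by (simp add: fr_def)

lemma psi_mul_cube: "\<psi> (a * x^3) = \<psi> (fr a * x)"
proof -
  have "a * x^3 = (fr a * x)^3" by (simp add: power_mult_distrib fr_cube)
  then show ?thesis by (simp add: psi_cube)
qed

lemma psi_L: "\<psi> (a * Lf x) = \<psi> ((fr a - a) * x)"
proof -
  have "\<psi> (a * Lf x) = \<psi> (a * x^3 - a * x)" by (simp add: Lf_def algebra_simps)
  also have "\<dots> = \<psi> (fr a * x) * cnj (\<psi> (a * x))" by (simp add: psi_diff psi_mul_cube)
  also have "\<dots> = \<psi> ((fr a - a) * x)" by (simp add: psi_diff algebra_simps)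
  finally show ?thesis .
qed

lemma fr_fix: "fr a = a \<longleftrightarrow> a \<in> S3"
proof
  assume "fr a = a"
  then have "a^3 = a" using fr_cube[of a] by simp
  then show "a \<in> S3" using in_F3 by simp
next
  assume "a \<in> S3"
  then show "fr a = a" unfolding fr_def using F3_frob in_F3 by blast
qed

lemma ind_L: "(if Lf x = y then 1 else 0) = (1 / of_nat (card (UNIV::'a set))) * (\<Sum>a\<in>UNIV. \<psi> (a * (Lf x - y)))"
proof -
  have "(\<Sum>a\<in>UNIV. \<psi> (a * (Lf x - y))) = (\<Sum>a\<in>UNIV. \<psi> ((Lf x - y) * a))"
    by (simp add: mult.commute)
  then show ?thesis using psi_orth[of "Lf x - y"] by simp
qed

lemma Phi_formula:
  fixes g :: "'a \<Rightarrow> complex"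
  assumes i: "i \<in> S3"
  shows "(\<Sum>x\<in>UNIV. \<Sum>b\<in>UNIV. (if Lf x = b^2 \<and> tr b = i then g x else 0)) =
    (1 / (3 * of_nat (card (UNIV::'a set)))) * (\<Sum>s\<in>S3. ee (- (s * i)) *
       (\<Sum>a\<in>UNIV. (\<Sum>x\<in>UNIV. g x * \<psi> (a * Lf x)) * (\<Sum>b\<in>UNIV. \<psi> ((- a) * b^2 + s * b))))"
proof -
  let ?c = "1 / (3 * of_nat (card (UNIV::'a set))) :: complex"
  let ?F = "\<lambda>x b s a. ee (- (s * i)) * (g x * \<psi> (a * Lf x)) * \<psi> ((- a) * b^2 + s * b)"
  have pt: "(if Lf x = b^2 \<and> tr b = i then g x else 0) = ?c * (\<Sum>s\<in>S3. \<Sum>a\<in>UNIV. ?F x b s a)" for x b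
  proof -
    have "(if Lf x = b^2 \<and> tr b = i then g x else 0) =
        g x * (if Lf x = b^2 then 1 else 0) * (if tr b = i then 1 else 0)" by simp
    also have "\<dots> = g x * ((1 / of_nat (card (UNIV::'a set))) * (\<Sum>a\<in>UNIV. \<psi> (a * (Lf x - b^2))))
        * ((1/3) * (\<Sum>s\<in>S3. \<psi> (s * b) * ee (- (s * i))))"
      by (simp only: ind_L indicator_tr[OF i])
    also have "\<dots> = ?c * ((g x * (\<Sum>a\<in>UNIV. \<psi> (a * (Lf x - b^2)))) * (\<Sum>s\<in>S3. \<psi> (s * b) * ee (- (s * i))))"
      by (rule aux_c)
    also have "\<dots> = ?c * ((\<Sum>a\<in>UNIV. g x * \<psi> (a * (Lf x - b^2))) * (\<Sum>s\<in>S3. \<psi> (s * b) * ee (- (s * i))))"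
      by (simp only: sum_distrib_left)
    also have "\<dots> = ?c * (\<Sum>s\<in>S3. \<Sum>a\<in>UNIV. g x * \<psi> (a * (Lf x - b^2)) * (\<psi> (s * b) * ee (- (s * i))))"
      by (simp add: sum_product sum.swap[of _ UNIV S3])
    also have "\<dots> = ?c * (\<Sum>s\<in>S3. \<Sum>a\<in>UNIV. ?F x b s a)"
    proof -
      have eqF: "g x * \<psi> (a * (Lf x - b^2)) * (\<psi> (s * b) * ee (- (s * i))) = ?F x b s a" for a s
      proof -
        have "\<psi> (a * (Lf x - b^2)) * \<psi> (s * b) = \<psi> (a * Lf x) * \<psi> ((- a) * b^2 + s * b)"
          by (simp add: psi_add[symmetric] algebra_simps)
        then show ?thesis by (simp add: mult_ac)
      qed
      show ?thesis by (intro arg_cong[where f="\<lambda>z. ?c * z"] sum.cong refl eqF)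
    qed
    finally show ?thesis .
  qed
  have "(\<Sum>x\<in>UNIV. \<Sum>b\<in>UNIV. (if Lf x = b^2 \<and> tr b = i then g x else 0)) =
      ?c * (\<Sum>x\<in>UNIV. \<Sum>b\<in>UNIV. \<Sum>s\<in>S3. \<Sum>a\<in>UNIV. ?F x b s a)"
    by (simp add: pt sum_distrib_left)
  also have "(\<Sum>x\<in>UNIV. \<Sum>b\<in>UNIV. \<Sum>s\<in>S3. \<Sum>a\<in>UNIV. ?F x b s a) =
      (\<Sum>x\<in>UNIV. \<Sum>s\<in>S3. \<Sum>b\<in>UNIV. \<Sum>a\<in>UNIV. ?F x b s a)"
    by (rule sum.cong[OF refl], rule sum.swap)
  also have "\<dots> = (\<Sum>x\<in>UNIV. \<Sum>s\<in>S3. \<Sum>a\<in>UNIV. \<Sum>b\<in>UNIV. ?F x b s a)"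
    by (rule sum.cong[OF refl], rule sum.cong[OF refl], rule sum.swap)
  also have "\<dots> = (\<Sum>s\<in>S3. \<Sum>x\<in>UNIV. \<Sum>a\<in>UNIV. \<Sum>b\<in>UNIV. ?F x b s a)"
    by (rule sum.swap)
  also have "\<dots> = (\<Sum>s\<in>S3. \<Sum>a\<in>UNIV. \<Sum>x\<in>UNIV. \<Sum>b\<in>UNIV. ?F x b s a)"
    by (rule sum.cong[OF refl], rule sum.swap)
  also have "\<dots> = (\<Sum>s\<in>S3. \<Sum>a\<in>UNIV. ee (- (s * i)) *
       ((\<Sum>x\<in>UNIV. g x * \<psi> (a * Lf x)) * (\<Sum>b\<in>UNIV. \<psi> ((- a) * b^2 + s * b))))"
  proof (intro sum.cong refl)
    fix s a
    show "(\<Sum>x\<in>UNIV. \<Sum>b\<in>UNIV. ?F x b s a) = ee (- (s * i)) *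
       ((\<Sum>x\<in>UNIV. g x * \<psi> (a * Lf x)) * (\<Sum>b\<in>UNIV. \<psi> ((- a) * b^2 + s * b)))"
      apply (unfold sum_product)
      apply (unfold sum_distrib_left)
      apply (simp only: mult.assoc)
      done
  qed
  also have "\<dots> = (\<Sum>s\<in>S3. ee (- (s * i)) *
       (\<Sum>a\<in>UNIV. (\<Sum>x\<in>UNIV. g x * \<psi> (a * Lf x)) * (\<Sum>b\<in>UNIV. \<psi> ((- a) * b^2 + s * b))))"
    by (simp only: sum_distrib_left)
  finally show ?thesis .
qed

end

context fld3
begin


lemma Q_eval: "(\<Sum>b\<in>UNIV. \<psi> ((- a) * b^2 + s * b)) =
  (if a = 0 then (if s = 0 then (of_nat (card (UNIV::'a set)) :: complex) else 0) else \<chi> (- a) * G * \<psi> (s^2 / a))"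
proof (cases "a = 0")
  case True
  then show ?thesis using psi_orth[of s] by simp
next
  case False
  then have "- a \<noteq> 0" by simp
  from gauss_quad[OF this, of s] False show ?thesis by simp
qed

lemma X1_eval: "(\<Sum>x\<in>UNIV. \<psi> (a * Lf x)) = (if a \<in> S3 then (of_nat (card (UNIV::'a set)) :: complex) else 0)"
  using psi_orth[of "fr a - a"] fr_fix[of a] by (simp add: psi_L)

lemma Xchi_eval: "(\<Sum>x\<in>UNIV. \<chi> x * \<psi> (a * Lf x)) = \<chi> (fr a - a) * G"
  using gauss_lin[of "fr a - a"] by (simp add: psi_L)

lemma S3_sum: "(\<Sum>s\<in>S3. f s) = f 0 + f 1 + f (-1::'a)"
  using one_ne_m1 by (simp add: S3_def add.assoc)

lemma sum_if_S3: "(\<Sum>a\<in>UNIV. (if (a::'a) \<in> S3 then f a else 0)) = (\<Sum>a\<in>S3. f a)"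
  using sum.inter_restrict[of "UNIV::'a set" f S3] by simp

definition Bc :: "'a \<Rightarrow> complex" where
  "Bc i = (\<Sum>s\<in>S3. ee (- (s * i)) * (\<chi> (-1) * \<psi> (s^2) + \<psi> (- (s^2))))"

lemma P_formula: assumes i: "i \<in> S3"
  shows "(\<Sum>x\<in>UNIV. \<Sum>b\<in>UNIV. (if Lf x = b^2 \<and> tr b = i then 1 else 0)) = ((of_nat (card (UNIV::'a set)) :: complex) + G * Bc i) / 3"
proof -
  have q0: "(of_nat (card (UNIV::'a set)) :: complex) \<noteq> 0" by simp
  have inner: "(\<Sum>a\<in>UNIV. (\<Sum>x\<in>UNIV. 1 * \<psi> (a * Lf x)) * (\<Sum>b\<in>UNIV. \<psi> ((- a) * b^2 + s * b)))
      = (of_nat (card (UNIV::'a set)) :: complex) * ((if s = 0 then (of_nat (card (UNIV::'a set)) :: complex) else 0) + G * (\<chi> (-1) * \<psi> (s^2) + \<psi> (- (s^2))))" for s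
  proof -
    have "(\<Sum>a\<in>UNIV. (\<Sum>x\<in>UNIV. 1 * \<psi> (a * Lf x)) * (\<Sum>b\<in>UNIV. \<psi> ((- a) * b^2 + s * b)))
        = (\<Sum>a\<in>UNIV. if a \<in> S3 then (of_nat (card (UNIV::'a set)) :: complex) * (\<Sum>b\<in>UNIV. \<psi> ((- a) * b^2 + s * b)) else 0)"
      by (rule sum.cong) (auto simp: X1_eval)
    also have "\<dots> = (\<Sum>a\<in>S3. (of_nat (card (UNIV::'a set)) :: complex) * (\<Sum>b\<in>UNIV. \<psi> ((- a) * b^2 + s * b)))"
      by (rule sum_if_S3)
    also have "\<dots> = (of_nat (card (UNIV::'a set)) :: complex) * ((if s = 0 then (of_nat (card (UNIV::'a set)) :: complex) else 0) + G * (\<chi> (-1) * \<psi> (s^2) + \<psi> (- (s^2))))"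
      unfolding S3_sum Q_eval by (simp add: chi_1 algebra_simps psi_zero)
    finally show ?thesis .
  qed
  have "(\<Sum>x\<in>UNIV. \<Sum>b\<in>UNIV. (if Lf x = b^2 \<and> tr b = i then 1 else 0)) = (1 / (3 * (of_nat (card (UNIV::'a set)) :: complex))) * (\<Sum>s\<in>S3. ee (- (s * i)) *
       (\<Sum>a\<in>UNIV. (\<Sum>x\<in>UNIV. 1 * \<psi> (a * Lf x)) * (\<Sum>b\<in>UNIV. \<psi> ((- a) * b^2 + s * b))))"
    by (rule Phi_formula[OF i, where g="\<lambda>_. 1"])
  also have "\<dots> = (1 / (3 * (of_nat (card (UNIV::'a set)) :: complex))) * (\<Sum>s\<in>S3. ee (- (s * i)) *
       ((of_nat (card (UNIV::'a set)) :: complex) * ((if s = 0 then (of_nat (card (UNIV::'a set)) :: complex) else 0) + G * (\<chi> (-1) * \<psi> (s^2) + \<psi> (- (s^2))))))"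
    by (simp only: inner)
  also have "\<dots> = (1 / (3 * (of_nat (card (UNIV::'a set)) :: complex))) * ((of_nat (card (UNIV::'a set)) :: complex) * (\<Sum>s\<in>S3. ee (- (s * i)) *
       ((if s = 0 then (of_nat (card (UNIV::'a set)) :: complex) else 0) + G * (\<chi> (-1) * \<psi> (s^2) + \<psi> (- (s^2))))))"
    by (simp add: sum_distrib_left mult_ac)
  also have "\<dots> = (1/3) * (\<Sum>s\<in>S3. ee (- (s * i)) *
       ((if s = 0 then (of_nat (card (UNIV::'a set)) :: complex) else 0) + G * (\<chi> (-1) * \<psi> (s^2) + \<psi> (- (s^2)))))"
    using q0 by simp
  finally have A: "(\<Sum>x\<in>UNIV. \<Sum>b\<in>UNIV. (if Lf x = b^2 \<and> tr b = i then 1 else 0)) = (1/3) * (\<Sum>s\<in>S3. ee (- (s * i)) *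
       ((if s = 0 then (of_nat (card (UNIV::'a set)) :: complex) else 0) + G * (\<chi> (-1) * \<psi> (s^2) + \<psi> (- (s^2)))))" .
  have B: "(\<Sum>s\<in>S3. ee (- (s * i)) *
       ((if s = 0 then (of_nat (card (UNIV::'a set)) :: complex) else 0) + G * (\<chi> (-1) * \<psi> (s^2) + \<psi> (- (s^2)))))
     = (\<Sum>s\<in>S3. ee (- (s * i)) * (if s = 0 then (of_nat (card (UNIV::'a set)) :: complex) else 0))
       + G * Bc i"
    by (simp add: Bc_def distrib_left sum.distrib sum_distrib_left mult_ac)
  have C: "(\<Sum>s\<in>S3. ee (- (s * i)) * (if s = 0 then (of_nat (card (UNIV::'a set)) :: complex) else 0))
     = (of_nat (card (UNIV::'a set)) :: complex)"
    unfolding S3_sum by (simp add: ee_0)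
  show ?thesis unfolding A B C by simp
qed

lemma fr_nz: "b \<noteq> 0 \<Longrightarrow> fr b \<noteq> 0" by (simp add: fr_def)

lemma s6: "s \<in> S3 \<Longrightarrow> (s::'a)^6 = s^2" by (auto simp: S3_def)

definition Tc :: "'a \<Rightarrow> complex" where
  "Tc s = (\<Sum>u\<in>-{0}. \<chi> (1 - u^2) * \<psi> (s^2 / u))"

lemma reindex_cube: assumes s: "s \<in> S3"
  shows "Tc s = (\<Sum>a\<in>-{0}. \<chi> a * \<chi> (fr a - a) * \<psi> (s^2 / a))"
  unfolding Tc_def
proof (rule sum.reindex_bij_witness[of _ fr "\<lambda>u. u^3"])
  fix u :: 'a assume u: "u \<in> -{0}"
  then have u0: "u \<noteq> 0" by simp
  have f: "fr (u^3) = u" by (rule fr_of_cube)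
  have e: "u^3 * (u - u^3) = (u^2)^2 * (1 - u^2)"
    by (simp add: power2_eq_square power3_eq_cube algebra_simps)
  have "\<chi> (u^3) * \<chi> (fr (u^3) - u^3) = \<chi> ((u^2)^2 * (1 - u^2))"
    by (simp only: f chi_mult[symmetric] e)
  also have "\<dots> = \<chi> (1 - u^2)" using chi_sqmult[of "u^2" "1 - u^2"] u0 by simp
  finally have c: "\<chi> (u^3) * \<chi> (fr (u^3) - u^3) = \<chi> (1 - u^2)" .
  have "s^2 / u^3 = (s^2 / u)^3" using s6[OF s] by (simp add: power_divide power_mult[symmetric])
  then have p: "\<psi> (s^2 / u^3) = \<psi> (s^2 / u)" by (simp add: psi_cube)
  show "\<chi> (u^3) * \<chi> (fr (u^3) - u^3) * \<psi> (s^2 / u^3) = \<chi> (1 - u^2) * \<psi> (s^2 / u)"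
    using c p by simp
qed (auto simp: fr_of_cube fr_cube fr_nz)

lemma M_formula: assumes i: "i \<in> S3"
  shows "(\<Sum>x\<in>UNIV. \<Sum>b\<in>UNIV. (if Lf x = b^2 \<and> tr b = i then \<chi> x else 0)) =
    (1/3) * (\<Sum>s\<in>S3. ee (- (s * i)) * Tc s)"
proof -
  have q0: "(of_nat (card (UNIV::'a set)) :: complex) \<noteq> 0" by simp
  have inner: "(\<Sum>a\<in>UNIV. (\<Sum>x\<in>UNIV. \<chi> x * \<psi> (a * Lf x)) * (\<Sum>b\<in>UNIV. \<psi> ((- a) * b^2 + s * b)))
      = (of_nat (card (UNIV::'a set)) :: complex) * Tc s" if s: "s \<in> S3" for s
  proof -
    have "(\<Sum>a\<in>UNIV. (\<Sum>x\<in>UNIV. \<chi> x * \<psi> (a * Lf x)) * (\<Sum>b\<in>UNIV. \<psi> ((- a) * b^2 + s * b)))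
        = (\<Sum>a\<in>UNIV. \<chi> (fr a - a) * G * (\<Sum>b\<in>UNIV. \<psi> ((- a) * b^2 + s * b)))"
      by (simp add: Xchi_eval)
    also have "\<dots> = (\<Sum>a\<in>-{0}. \<chi> (fr a - a) * G * (\<Sum>b\<in>UNIV. \<psi> ((- a) * b^2 + s * b)))"
      by (rule sum.mono_neutral_right) (auto simp: fr_0 chi_0)
    also have "\<dots> = (\<Sum>a\<in>-{0}. G^2 * \<chi> (-1) * (\<chi> a * \<chi> (fr a - a) * \<psi> (s^2 / a)))"
    proof (rule sum.cong[OF refl])
      fix a :: 'a assume "a \<in> -{0}"
      then have a0: "a \<noteq> 0" by simp
      have "\<chi> (- a) = \<chi> (-1) * \<chi> a" using chi_mult[of "-1" a] by simp
      moreover have "(\<Sum>b\<in>UNIV. \<psi> ((- a) * b^2 + s * b)) = \<chi> (- a) * G * \<psi> (s^2 / a)"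
        using Q_eval[of a s] a0 by simp
      ultimately show "\<chi> (fr a - a) * G * (\<Sum>b\<in>UNIV. \<psi> ((- a) * b^2 + s * b)) =
          G^2 * \<chi> (-1) * (\<chi> a * \<chi> (fr a - a) * \<psi> (s^2 / a))"
        by (simp add: power2_eq_square mult_ac)
    qed
    also have "\<dots> = G^2 * \<chi> (-1) * Tc s"
      by (simp add: sum_distrib_left[symmetric] reindex_cube[OF s, symmetric])
    also have "\<dots> = (of_nat (card (UNIV::'a set)) :: complex) * Tc s"
      using G_sq chi_sq1[of "-1::'a"] by (simp add: mult_ac)
    finally show ?thesis .
  qed
  have "(\<Sum>x\<in>UNIV. \<Sum>b\<in>UNIV. (if Lf x = b^2 \<and> tr b = i then \<chi> x else 0))
     = (1 / (3 * (of_nat (card (UNIV::'a set)) :: complex))) * (\<Sum>s\<in>S3. ee (- (s * i)) * ((of_nat (card (UNIV::'a set)) :: complex) * Tc s))"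
    by (simp only: Phi_formula[OF i] inner cong: sum.cong)
  also have "\<dots> = (1/3) * (\<Sum>s\<in>S3. ee (- (s * i)) * Tc s)"
    using q0 by (simp add: sum_distrib_left field_simps)
  finally show ?thesis .
qed

end

context fld3
begin

definition Kl :: "'a \<Rightarrow> 'a \<Rightarrow> complex" where
  "Kl a b = (\<Sum>w\<in>-{0}. \<psi> (a * w + b / w))"

lemma sum_punct: "(\<Sum>x\<in>UNIV. f (x::'a)) = f 0 + (\<Sum>x\<in>-{0}. f x)"
  by (metis Compl_eq_Diff_UNIV finite sum.remove UNIV_I)

lemma chi_neg_mult: "(w::'a) \<noteq> 0 \<Longrightarrow> \<chi> w * \<chi> (- w) = \<chi> (-1)"
proof -
  assume w: "w \<noteq> 0"
  have "\<chi> (- w) = \<chi> (-1) * \<chi> w" using chi_mult[of "-1" w] by simp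
  then show ?thesis using chi_sq1[OF w] by (simp add: mult_ac)
qed

lemma sum_chi_1mu2: "(\<Sum>u\<in>UNIV. \<chi> (1 - u^2)) = - \<chi> (-1)"
proof -
  have "(\<Sum>u\<in>UNIV. \<chi> (1 - u^2)) = (\<Sum>u\<in>UNIV. (1 / G) * (\<Sum>w\<in>UNIV. \<chi> w * \<psi> (w * (1 - u^2))))"
    by (rule sum.cong[OF refl], rule chi_inv_formula)
  also have "\<dots> = (1 / G) * (\<Sum>u\<in>UNIV. \<Sum>w\<in>UNIV. \<chi> w * \<psi> (w * (1 - u^2)))"
    by (simp add: sum_distrib_left)
  also have "\<dots> = (1 / G) * (\<Sum>w\<in>UNIV. \<Sum>u\<in>UNIV. \<chi> w * \<psi> (w * (1 - u^2)))"
    by (subst sum.swap) (rule refl)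
  also have "\<dots> = (1 / G) * (\<Sum>w\<in>UNIV. (if w = 0 then 0 else \<chi> (-1) * G * \<psi> w))"
  proof (rule arg_cong[where f="\<lambda>z. (1/G) * z"], rule sum.cong[OF refl])
    fix w :: 'a
    show "(\<Sum>u\<in>UNIV. \<chi> w * \<psi> (w * (1 - u^2))) = (if w = 0 then 0 else \<chi> (-1) * G * \<psi> w)"
    proof (cases "w = 0")
      case True then show ?thesis by (simp add: chi_0)
    next
      case False
      have "(\<Sum>u\<in>UNIV. \<chi> w * \<psi> (w * (1 - u^2))) = \<chi> w * \<psi> w * (\<Sum>u\<in>UNIV. \<psi> ((- w) * u^2 + 0 * u))"
        by (simp add: sum_distrib_left algebra_simps psi_diff psi_neg)
      also have "\<dots> = \<chi> w * \<psi> w * (\<chi> (- w) * G)"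
        using Q_eval[of w 0] False by (simp add: psi_zero)
      also have "\<dots> = \<chi> (-1) * G * \<psi> w" using chi_neg_mult[OF False] by (simp add: mult_ac)
      finally show ?thesis using False by simp
    qed
  qed
  also have "\<dots> = (1 / G) * (\<chi> (-1) * G * (\<Sum>w\<in>-{0}. \<psi> (1 * w)))"
    by (subst sum_punct) (simp add: sum_distrib_left)
  also have "\<dots> = - \<chi> (-1)" using G_ne0 psi_orth_punct[of 1] by simp
  finally show ?thesis .
qed

lemma Tc0: "Tc 0 = - \<chi> (-1) - 1"
proof -
  have "Tc 0 = (\<Sum>u\<in>-{0}. \<chi> (1 - u^2))" by (simp add: Tc_def psi_zero)
  also have "\<dots> = (\<Sum>u\<in>UNIV. \<chi> (1 - u^2)) - 1" by (subst sum_punct) (simp add: chi_1)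
  finally show ?thesis using sum_chi_1mu2 by simp
qed

lemma sum_chi_vsq: "(\<Sum>v\<in>UNIV. \<chi> (v^2 - 1) * \<psi> v) = Kl (-1) (-1)"
proof -
  have "(\<Sum>v\<in>UNIV. \<chi> (v^2 - 1) * \<psi> v) = (\<Sum>v\<in>UNIV. (1 / G) * (\<Sum>w\<in>UNIV. \<chi> w * \<psi> (w * (v^2 - 1))) * \<psi> v)"
    by (rule sum.cong[OF refl], subst chi_inv_formula, rule refl)
  also have "\<dots> = (1 / G) * (\<Sum>v\<in>UNIV. \<Sum>w\<in>UNIV. \<chi> w * \<psi> (w * (v^2 - 1)) * \<psi> v)"
    by (simp add: sum_distrib_left sum_distrib_right mult_ac)
  also have "\<dots> = (1 / G) * (\<Sum>w\<in>UNIV. \<Sum>v\<in>UNIV. \<chi> w * \<psi> (w * (v^2 - 1)) * \<psi> v)"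
    by (subst sum.swap) (rule refl)
  also have "\<dots> = (1 / G) * (\<Sum>w\<in>UNIV. (if w = 0 then 0 else G * \<psi> (- w + (-1) / w)))"
  proof (rule arg_cong[where f="\<lambda>z. (1/G) * z"], rule sum.cong[OF refl])
    fix w :: 'a
    show "(\<Sum>v\<in>UNIV. \<chi> w * \<psi> (w * (v^2 - 1)) * \<psi> v) = (if w = 0 then 0 else G * \<psi> (- w + (-1) / w))"
    proof (cases "w = 0")
      case True then show ?thesis by (simp add: chi_0)
    next
      case False
      have "(\<Sum>v\<in>UNIV. \<chi> w * \<psi> (w * (v^2 - 1)) * \<psi> v) = \<chi> w * \<psi> (- w) * (\<Sum>v\<in>UNIV. \<psi> ((- (- w)) * v^2 + 1 * v))"
        by (simp add: sum_distrib_left algebra_simps psi_add[symmetric])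
      also have "\<dots> = \<chi> w * \<psi> (- w) * (\<chi> w * G * \<psi> (1 / (- w)))"
        using Q_eval[of "-w" 1] False by simp
      also have "\<dots> = G * (\<psi> (- w) * \<psi> ((-1) / w))"
        using chi_sq1[OF False] by (simp add: mult_ac)
      finally show ?thesis using False by (simp add: psi_diff psi_neg)
    qed
  qed
  also have "\<dots> = (\<Sum>w\<in>-{0}. \<psi> (- w + (-1) / w))"
    using G_ne0 by (subst sum_punct) (simp add: sum_distrib_left)
  finally show ?thesis by (simp add: Kl_def)
qed

lemma Tc1: "Tc 1 = Kl (-1) (-1) - \<chi> (-1)"
proof -
  have "Tc 1 = (\<Sum>u\<in>-{0}. \<chi> (1 - u^2) * \<psi> (1 / u))" by (simp add: Tc_def)
  also have "\<dots> = (\<Sum>v\<in>-{0}. \<chi> (v^2 - 1) * \<psi> v)"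
  proof (rule sum.reindex_bij_witness[of _ "\<lambda>v. 1 / v" "\<lambda>u. 1 / u"])
    fix u :: 'a assume "u \<in> -{0}"
    then have u0: "u \<noteq> 0" by simp
    have "(1/u)^2 - 1 = (1/u)^2 * (1 - u^2)" using u0 by (simp add: field_simps)
    then have "\<chi> ((1/u)^2 - 1) = \<chi> (1 - u^2)" using chi_sqmult[of "1/u" "1 - u^2"] u0 by simp
    then show "\<chi> ((1/u)^2 - 1) * \<psi> (1/u) = \<chi> (1 - u^2) * \<psi> (1 / u)" by simp
  qed auto
  also have "\<dots> = (\<Sum>v\<in>UNIV. \<chi> (v^2 - 1) * \<psi> v) - \<chi> (-1)"
    using sum_punct[of "\<lambda>v. \<chi> (v^2 - 1) * \<psi> v"] by (simp add: psi_zero)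
  finally show ?thesis using sum_chi_vsq by simp
qed

lemma Tcm1: "Tc (-1) = Tc 1" by (simp add: Tc_def)

lemma M_expl: assumes i: "i \<in> S3"
  shows "(\<Sum>x\<in>UNIV. \<Sum>b\<in>UNIV. (if Lf x = b^2 \<and> tr b = i then \<chi> x else 0)) =
    (1/3) * (Tc 0 + (ee (- i) + ee i) * Tc 1)"
  unfolding M_formula[OF i] S3_sum using ee_0 by (simp add: Tcm1 algebra_simps)

end

context fld3
begin

definition T2 :: "('a \<times> 'a) set" where "T2 = (-{0}) \<times> (-{0})"
definition d1 :: "'a \<times> 'a \<Rightarrow> 'a" where "d1 p = fst p - snd p"
definition d2 :: "'a \<times> 'a \<Rightarrow> 'a" where "d2 p = 1 / fst p - 1 / snd p"

lemma Kl_norm: "Kl a b * cnj (Kl a b) = (\<Sum>p\<in>T2. \<psi> (a * d1 p + b * d2 p))"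
proof -
  have "Kl a b * cnj (Kl a b) = (\<Sum>w\<in>-{0}. \<Sum>z\<in>-{0}. \<psi> (a * w + b / w) * cnj (\<psi> (a * z + b / z)))"
    by (simp add: Kl_def sum_product cnj_sum)
  also have "\<dots> = (\<Sum>w\<in>-{0}. \<Sum>z\<in>-{0}. \<psi> (a * d1 (w, z) + b * d2 (w, z)))"
    by (intro sum.cong refl) (simp add: psi_diff[symmetric] d1_def d2_def algebra_simps)
  also have "\<dots> = (\<Sum>p\<in>T2. \<psi> (a * d1 p + b * d2 p))"
    unfolding T2_def by (subst sum.cartesian_product) (simp add: split_def)
  finally show ?thesis .
qed

definition Rel :: "('a \<times> 'a) \<Rightarrow> ('a \<times> 'a) \<Rightarrow> bool" where
  "Rel p p' \<longleftrightarrow> d1 p + d1 p' = 0 \<and> d2 p + d2 p' = 0"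

definition Dset :: "(('a \<times> 'a) \<times> ('a \<times> 'a)) set" where
  "Dset = {pp \<in> T2 \<times> T2. Rel (fst pp) (snd pp)}"

lemma moment4: "(\<Sum>a\<in>UNIV. \<Sum>b\<in>UNIV. (Kl a b * cnj (Kl a b))^2)
   = (of_nat (card (UNIV::'a set)))^2 * of_nat (card Dset)"
proof -
  let ?F = "\<lambda>a b p p'. \<psi> ((d1 p + d1 p') * a) * \<psi> ((d2 p + d2 p') * b)"
  have sq: "(Kl a b * cnj (Kl a b))^2 = (\<Sum>p\<in>T2. \<Sum>p'\<in>T2. ?F a b p p')" for a b
  proof -
    have "(Kl a b * cnj (Kl a b))^2 = (\<Sum>p\<in>T2. \<Sum>p'\<in>T2. \<psi> (a * d1 p + b * d2 p) * \<psi> (a * d1 p' + b * d2 p'))"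
      by (simp add: Kl_norm power2_eq_square sum_product)
    also have "\<dots> = (\<Sum>p\<in>T2. \<Sum>p'\<in>T2. ?F a b p p')"
      by (intro sum.cong refl) (simp add: psi_add[symmetric] algebra_simps)
    finally show ?thesis .
  qed
  have "(\<Sum>a\<in>UNIV. \<Sum>b\<in>UNIV. (Kl a b * cnj (Kl a b))^2) =
      (\<Sum>a\<in>UNIV. \<Sum>b\<in>UNIV. \<Sum>p\<in>T2. \<Sum>p'\<in>T2. ?F a b p p')"
    by (simp only: sq)
  also have "\<dots> = (\<Sum>a\<in>UNIV. \<Sum>p\<in>T2. \<Sum>b\<in>UNIV. \<Sum>p'\<in>T2. ?F a b p p')"
    by (rule sum.cong[OF refl], rule sum.swap)
  also have "\<dots> = (\<Sum>a\<in>UNIV. \<Sum>p\<in>T2. \<Sum>p'\<in>T2. \<Sum>b\<in>UNIV. ?F a b p p')"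
    by (rule sum.cong[OF refl], rule sum.cong[OF refl], rule sum.swap)
  also have "\<dots> = (\<Sum>p\<in>T2. \<Sum>a\<in>UNIV. \<Sum>p'\<in>T2. \<Sum>b\<in>UNIV. ?F a b p p')"
    by (rule sum.swap)
  also have "\<dots> = (\<Sum>p\<in>T2. \<Sum>p'\<in>T2. \<Sum>a\<in>UNIV. \<Sum>b\<in>UNIV. ?F a b p p')"
    by (rule sum.cong[OF refl], rule sum.swap)
  also have "\<dots> = (\<Sum>p\<in>T2. \<Sum>p'\<in>T2. (of_nat (card (UNIV::'a set)))^2 * of_bool (Rel p p'))"
  proof (intro sum.cong refl)
    fix p p'
    have "(\<Sum>a\<in>UNIV. \<Sum>b\<in>UNIV. ?F a b p p') =
        (\<Sum>a\<in>UNIV. \<psi> ((d1 p + d1 p') * a)) * (\<Sum>b\<in>UNIV. \<psi> ((d2 p + d2 p') * b))"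
      by (simp add: sum_product)
    then show "(\<Sum>a\<in>UNIV. \<Sum>b\<in>UNIV. ?F a b p p') = (of_nat (card (UNIV::'a set)))^2 * of_bool (Rel p p')"
      by (simp add: psi_orth Rel_def power2_eq_square)
  qed
  also have "\<dots> = (of_nat (card (UNIV::'a set)))^2 * (\<Sum>p\<in>T2. \<Sum>p'\<in>T2. (of_bool (Rel p p') :: complex))"
    by (simp only: sum_distrib_left)
  also have "(\<Sum>p\<in>T2. \<Sum>p'\<in>T2. (of_bool (Rel p p') :: complex)) = (\<Sum>pp\<in>T2 \<times> T2. of_bool (Rel (fst pp) (snd pp)))"
    by (subst sum.cartesian_product) (simp add: split_def)
  also have "\<dots> = of_nat (card (T2 \<times> T2 \<inter> {pp. Rel (fst pp) (snd pp)}))"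
    by (rule sum_of_bool_eq) (simp_all add: T2_def)
  also have "T2 \<times> T2 \<inter> {pp. Rel (fst pp) (snd pp)} = Dset" by (auto simp: Dset_def)
  finally show ?thesis .
qed

end

context fld3
begin

lemma card_punct: "card (-{0::'a}) = card (UNIV::'a set) - 1"
  by (simp add: Compl_eq_Diff_UNIV card_Diff_singleton)

lemma card_T2: "card T2 = (card (UNIV::'a set) - 1)^2"
  by (simp add: T2_def card_cartesian_product card_punct power2_eq_square)

definition f1 :: "'a \<times> 'a \<Rightarrow> ('a \<times> 'a) \<times> ('a \<times> 'a)" where "f1 p = ((fst p, fst p), (snd p, snd p))"
definition f2 :: "'a \<times> 'a \<Rightarrow> ('a \<times> 'a) \<times> ('a \<times> 'a)" where "f2 p = ((fst p, snd p), (snd p, fst p))"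
definition f3 :: "'a \<times> 'a \<Rightarrow> ('a \<times> 'a) \<times> ('a \<times> 'a)" where "f3 p = ((fst p, snd p), (- fst p, - snd p))"

lemma Dset_sub: "Dset \<subseteq> f1 ` T2 \<union> f2 ` T2 \<union> f3 ` T2"
proof
  fix pp assume pD: "pp \<in> Dset"
  obtain w1 z1 w2 z2 where pp: "pp = ((w1, z1), (w2, z2))" by (metis surj_pair)
  have nz: "w1 \<noteq> 0" "z1 \<noteq> 0" "w2 \<noteq> 0" "z2 \<noteq> 0" using pD pp by (auto simp: Dset_def T2_def)
  have r1: "w1 - z1 + (w2 - z2) = 0" and r2: "1/w1 - 1/z1 + (1/w2 - 1/z2) = 0"
    using pD pp by (auto simp: Dset_def Rel_def d1_def d2_def)
  have s: "z1 + z2 = w1 + w2" using r1 by (simp add: algebra_simps)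
  show "pp \<in> f1 ` T2 \<union> f2 ` T2 \<union> f3 ` T2"
  proof (cases "w1 + w2 = 0")
    case True
    then have "w2 = - w1" "z2 = - z1" using s by (simp_all add: eq_neg_iff_add_eq_0 add.commute)
    then have "pp = f3 (w1, z1)" using pp by (simp add: f3_def)
    moreover have "(w1, z1) \<in> T2" using nz by (simp add: T2_def)
    ultimately show ?thesis by blast
  next
    case False
    have "(w1 + w2) * (z1 * z2) = (z1 + z2) * (w1 * w2)"
      using r2 nz by (simp add: field_simps)
    then have "(w1 + w2) * (z1 * z2) = (w1 + w2) * (w1 * w2)" using s by simp
    then have pr: "z1 * z2 = w1 * w2" using False by simp
    have "(z1 - w1) * (z1 - w2) = z1 * z1 - z1 * (w1 + w2) + w1 * w2" by (simp add: algebra_simps)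
    also have "\<dots> = z1 * z1 - z1 * (z1 + z2) + z1 * z2" using s pr by simp
    also have "\<dots> = 0" by (simp add: algebra_simps)
    finally have "z1 = w1 \<or> z1 = w2" by simp
    then show ?thesis
    proof
      assume "z1 = w1"
      then have "z2 = w2" using s by simp
      then have "pp = f1 (w1, w2)" using pp \<open>z1 = w1\<close> by (simp add: f1_def)
      moreover have "(w1, w2) \<in> T2" using nz by (simp add: T2_def)
      ultimately show ?thesis by blast
    next
      assume "z1 = w2"
      then have "z2 = w1" using s by simp
      then have "pp = f2 (w1, w2)" using pp \<open>z1 = w2\<close> by (simp add: f2_def)
      moreover have "(w1, w2) \<in> T2" using nz by (simp add: T2_def)
      ultimately show ?thesis by blast
    qed
  qed
qed

lemma card_Dset: "card Dset \<le> 3 * (card (UNIV::'a set) - 1)^2"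
proof -
  have "card Dset \<le> card (f1 ` T2 \<union> f2 ` T2 \<union> f3 ` T2)"
    by (rule card_mono[OF _ Dset_sub]) simp
  also have "\<dots> \<le> card (f1 ` T2) + card (f2 ` T2) + card (f3 ` T2)"
    by (meson add_mono card_Un_le le_refl order_trans)
  also have "\<dots> \<le> card T2 + card T2 + card T2"
    by (intro add_mono card_image_le) simp_all
  finally show ?thesis by (simp add: card_T2)
qed

lemma Kl_00: "Kl 0 0 = of_nat (card (UNIV::'a set) - 1)"
  by (simp add: Kl_def psi_zero card_punct)

lemma Kl_inv: assumes "a \<noteq> 0" shows "Kl a (1/a) = Kl (-1) (-1)"
  unfolding Kl_def
proof (rule sum.reindex_bij_witness[of _ "\<lambda>v. - v / a" "\<lambda>w. - a * w"])
  fix w :: 'a assume "w \<in> -{0}"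
  then have "w \<noteq> 0" by simp
  then show "\<psi> ((-1) * (- a * w) + (-1) / (- a * w)) = \<psi> (a * w + 1 / a / w)"
    using assms by (simp add: field_simps)
qed (use assms in auto)

lemma Kl_bound: "cmod (Kl (-1) (-1)) ^ 4 \<le> 2 * real (card (UNIV::'a set)) ^ 3"
proof -
  define n where "n = real (card (UNIV::'a set))"
  define N where "N a b = cmod (Kl a b) ^ 2" for a b
  define K4 where "K4 = cmod (Kl (-1) (-1)) ^ 4"
  have "(3::real)^1 \<le> 3^m" using m_pos by (intro power_increasing) auto
  moreover have "n = 3^m" unfolding n_def card3 by simp
  ultimately have n1: "n \<ge> 3" by simp
  have cq: "card (UNIV::'a set) \<ge> 1" using n1 unfolding n_def by linarith
  have eqc: "Kl a b * cnj (Kl a b) = complex_of_real (N a b)" for a b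
    unfolding N_def by (rule complex_norm_square[symmetric])
  have "(\<Sum>a\<in>UNIV. \<Sum>b\<in>UNIV. complex_of_real (N a b ^ 2)) = (complex_of_real n)^2 * of_nat (card Dset)"
    using moment4 by (simp add: eqc n_def)
  then have "complex_of_real (\<Sum>a\<in>UNIV. \<Sum>b\<in>UNIV. N a b ^ 2) = complex_of_real (n^2 * real (card Dset))"
    by simp
  then have mom: "(\<Sum>a\<in>UNIV. \<Sum>b\<in>UNIV. N a b ^ 2) = n^2 * real (card Dset)"
    by (simp only: of_real_eq_iff)
  have "(\<Sum>a\<in>UNIV. N a (inverse a) ^ 2) \<le> (\<Sum>a\<in>UNIV. \<Sum>b\<in>UNIV. N a b ^ 2)"
    by (intro sum_mono member_le_sum) auto
  moreover have "(\<Sum>a\<in>UNIV. N a (inverse a) ^ 2) = N 0 0 ^ 2 + (\<Sum>a\<in>-{0}. N a (inverse a) ^ 2)"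
    using sum_punct[of "\<lambda>a. N a (inverse a) ^ 2"] by simp
  moreover have "(\<Sum>a\<in>-{0}. N a (inverse a) ^ 2) = (n - 1) * K4"
  proof -
    have "(\<Sum>a\<in>-{0}. N a (inverse a) ^ 2) = (\<Sum>a\<in>-{0::'a}. K4)"
      by (rule sum.cong) (auto simp: N_def K4_def Kl_inv[unfolded divide_inverse, simplified])
    then show ?thesis using cq by (simp add: card_punct n_def of_nat_diff)
  qed
  moreover have "N 0 0 ^ 2 = (n - 1)^4"
  proof -
    have "cmod (Kl 0 0) = real (card (UNIV::'a set) - 1)" by (simp only: Kl_00 norm_of_nat)
    then have "cmod (Kl 0 0) = n - 1" using cq by (simp add: n_def of_nat_diff)
    then show ?thesis by (simp add: N_def power_mult[symmetric])
  qed
  ultimately have "(n - 1)^4 + (n - 1) * K4 \<le> n^2 * real (card Dset)" using mom by simp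
  also have "\<dots> \<le> n^2 * (3 * (n - 1)^2)"
  proof -
    have "real (card Dset) \<le> real (3 * (card (UNIV::'a set) - 1)^2)"
      using card_Dset by (simp only: of_nat_le_iff)
    also have "real (3 * (card (UNIV::'a set) - 1)^2) = 3 * (n - 1)^2"
      using cq by (simp add: n_def of_nat_diff)
    finally show ?thesis by (intro mult_left_mono) simp_all
  qed
  finally have X: "(n - 1)^4 + (n - 1) * K4 \<le> n^2 * (3 * (n - 1)^2)" .
  have "(n - 1) * K4 \<le> n^2 * (3 * (n - 1)^2) - (n - 1)^4" using X by linarith
  also have "\<dots> = (n - 1) * (3 * n^2 * (n - 1) - (n - 1)^3)"
    by (simp add: power2_eq_square power3_eq_cube power4_eq_xxxx algebra_simps)
  finally have "(n - 1) * K4 \<le> (n - 1) * (3 * n^2 * (n - 1) - (n - 1)^3)" .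
  then have "K4 \<le> 3 * n^2 * (n - 1) - (n - 1)^3" using n1 by (simp add: mult_le_cancel_left_pos)
  also have "\<dots> = 2 * n^3 - 3 * n + 1"
    by (simp add: power2_eq_square power3_eq_cube algebra_simps)
  also have "\<dots> \<le> 2 * n^3" using n1 by simp
  finally show ?thesis by (simp add: K4_def n_def)
qed

end

context fld3
begin

lemma Re_chi: "Re (\<chi> x) = (if x = 0 then 0 else if x \<in> sqs then 1 else -1)"
  by (auto simp: chi_def sqs_def)

lemma no_witness_bound:
  assumes i: "i \<in> S3"
    and H: "\<not> (\<exists>x\<in>nonsquares. \<exists>b. b \<noteq> 0 \<and> Lf x = b^2 \<and> tr b = i)"
  shows "Re ((\<Sum>x\<in>UNIV. \<Sum>b\<in>UNIV. (if Lf x = b^2 \<and> tr b = i then 1 else 0))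
           - (\<Sum>x\<in>UNIV. \<Sum>b\<in>UNIV. (if Lf x = b^2 \<and> tr b = i then \<chi> x else 0))) \<le> 3"
proof -
  let ?C = "\<lambda>x b. Lf x = b^2 \<and> tr b = i"
  define h :: "'a \<Rightarrow> real" where "h x = (if x = -1 then 2 else if x = 0 then 1 else 0)" for x
  have "(\<Sum>x\<in>UNIV. \<Sum>b\<in>UNIV. (if ?C x b then 1 else 0))
           - (\<Sum>x\<in>UNIV. \<Sum>b\<in>UNIV. (if ?C x b then \<chi> x else 0))
        = (\<Sum>x\<in>UNIV. \<Sum>b\<in>UNIV. (if ?C x b then 1 - \<chi> x else 0))"
    by (simp add: sum_subtractf[symmetric] if_distrib cong: if_cong)
  then have "Re ((\<Sum>x\<in>UNIV. \<Sum>b\<in>UNIV. (if ?C x b then 1 else 0))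
           - (\<Sum>x\<in>UNIV. \<Sum>b\<in>UNIV. (if ?C x b then \<chi> x else 0)))
        = (\<Sum>x\<in>UNIV. \<Sum>b\<in>UNIV. (if ?C x b then 1 - Re (\<chi> x) else 0))"
    by (simp add: Re_sum if_distrib cong: if_cong)
  also have "\<dots> \<le> (\<Sum>x\<in>UNIV. \<Sum>b\<in>UNIV. (if (b::'a) = 0 then h x else 0))"
  proof -
    have pw: "(if ?C x b then 1 - Re (\<chi> x) else 0) \<le> (if b = 0 then h x else 0)" for x b
    proof (cases "?C x b")
      case False then show ?thesis by (auto simp: h_def)
    next
      case True
      show ?thesis
      proof (cases "b = 0")
        case True
        with \<open>?C x b\<close> have "x^3 = x" by (simp add: Lf_def)
        then have "x = 0 \<or> x = 1 \<or> x = -1" using in_F3 by (simp add: S3_def)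
        moreover have "(1::'a) \<in> sqs" by (auto simp: sqs_def intro: exI[of _ 1])
        ultimately show ?thesis using True \<open>?C x b\<close> one_ne_m1
          by (auto simp: Re_chi h_def)
      next
        case False
        have "x \<notin> nonsquares" using H False \<open>?C x b\<close> by blast
        moreover have x0: "x \<noteq> 0"
        proof
          assume "x = 0"
          then have "b^2 = 0" using \<open>?C x b\<close> by (simp add: Lf_def)
          then show False using False by simp
        qed
        ultimately have "x \<in> sqs" using trichotomy[of x] by auto
        then show ?thesis using \<open>?C x b\<close> False x0 by (simp add: Re_chi)
      qed
    qed
    show ?thesis by (rule sum_mono, rule sum_mono, rule pw)
  qed
  also have "\<dots> = (\<Sum>x\<in>UNIV. h x)" by (simp add: sum.delta')
  also have "\<dots> = (\<Sum>x\<in>UNIV. (if (x::'a) = -1 then 2 else 0) + (if x = 0 then 1 else (0::real)))"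
    by (rule sum.cong) (auto simp: h_def)
  also have "\<dots> = 3" by (simp add: sum.distrib)
  finally show ?thesis .
qed

lemma Tc0_norm: "cmod (Tc 0) \<le> 2"
proof -
  have "cmod (Tc 0) \<le> cmod (\<chi> (-1)) + 1" unfolding Tc0
    by (metis norm_minus_cancel norm_one norm_triangle_ineq4)
  then show ?thesis using chi_norm[of "-1::'a"] by simp
qed

lemma Tc1_norm: "cmod (Tc 1) \<le> cmod (Kl (-1) (-1)) + 1"
proof -
  have "cmod (Tc 1) \<le> cmod (Kl (-1) (-1)) + cmod (\<chi> (-1))" unfolding Tc1
    by (rule norm_triangle_ineq4)
  then show ?thesis using chi_norm[of "-1::'a"] by simp
qed

lemma Re_lower: "Re z \<ge> - cmod z"
  using abs_Re_le_cmod[of z] by linarith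

lemma ReP_M: assumes i: "i \<in> S3"
  shows "Re ((\<Sum>x\<in>UNIV. \<Sum>b\<in>UNIV. (if Lf x = b^2 \<and> tr b = i then 1 else 0))
           - (\<Sum>x\<in>UNIV. \<Sum>b\<in>UNIV. (if Lf x = b^2 \<and> tr b = i then \<chi> x else 0)))
     \<ge> (real (card (UNIV::'a set)) - cmod G * cmod (Bc i) - 2
          - cmod (ee (- i) + ee i) * (cmod (Kl (-1) (-1)) + 1)) / 3"
proof -
  let ?c = "ee (- i) + ee i"
  have e: "(\<Sum>x\<in>UNIV. \<Sum>b\<in>UNIV. (if Lf x = b^2 \<and> tr b = i then 1 else 0))
           - (\<Sum>x\<in>UNIV. \<Sum>b\<in>UNIV. (if Lf x = b^2 \<and> tr b = i then \<chi> x else 0))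
     = (of_nat (card (UNIV::'a set)) + G * Bc i + (- Tc 0) + (- (?c * Tc 1))) / 3"
    unfolding P_formula[OF i] M_expl[OF i] by (simp add: field_simps)
  have r1: "Re (G * Bc i) \<ge> - (cmod G * cmod (Bc i))"
    using Re_lower[of "G * Bc i"] by (simp add: norm_mult)
  have r2: "Re (- Tc 0) \<ge> - 2" using Re_lower[of "- Tc 0"] Tc0_norm by simp
  have r3: "Re (- (?c * Tc 1)) \<ge> - (cmod ?c * (cmod (Kl (-1) (-1)) + 1))"
  proof -
    have "cmod (?c * Tc 1) \<le> cmod ?c * (cmod (Kl (-1) (-1)) + 1)"
      unfolding norm_mult by (rule mult_left_mono[OF Tc1_norm]) simp
    then show ?thesis using Re_lower[of "- (?c * Tc 1)"] by simp
  qed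
  show ?thesis unfolding e using r1 r2 r3 by simp
qed

lemma exists_witness:
  assumes i: "i \<in> S3"
    and key: "real (card (UNIV::'a set)) - cmod G * cmod (Bc i) - 2
          - cmod (ee (- i) + ee i) * (cmod (Kl (-1) (-1)) + 1) > 9"
  shows "\<exists>x\<in>nonsquares. \<exists>b. b \<noteq> 0 \<and> Lf x = b^2 \<and> tr b = i"
proof (rule ccontr)
  assume H: "\<not> ?thesis"
  define A where "A = real (card (UNIV::'a set)) - cmod G * cmod (Bc i) - 2
          - cmod (ee (- i) + ee i) * (cmod (Kl (-1) (-1)) + 1)"
  define R where "R = Re ((\<Sum>x\<in>UNIV. \<Sum>b\<in>UNIV. (if Lf x = b^2 \<and> tr b = i then 1 else 0))
           - (\<Sum>x\<in>UNIV. \<Sum>b\<in>UNIV. (if Lf x = b^2 \<and> tr b = i then \<chi> x else 0)))"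
  have "R \<le> 3" using no_witness_bound[OF i H] unfolding R_def .
  moreover have "A / 3 \<le> R" using ReP_M[OF i] unfolding R_def A_def .
  moreover have "9 < A" using key unfolding A_def .
  ultimately show False by linarith
qed

end

context fld3
begin

lemma ee_pm: assumes i: "i \<in> S3" shows "cmod (ee (- i) + ee i) = (if i = 0 then 2 else 1)"
proof -
  have "om + om^2 = -1" using om_sum by (simp add: algebra_simps eq_neg_iff_add_eq_0)
  then show ?thesis using i one_ne_m1 by (auto simp: S3_def ee_0 ee_1 ee_m1 add.commute)
qed

lemma ee_sum_nz: assumes i: "i \<in> S3" "i \<noteq> 0" shows "ee (- i) + ee i = om + om^2"
proof -
  have "i = 1 \<or> i = -1" using i by (auto simp: S3_def)
  then show ?thesis
  proof
    assume "i = 1" then show ?thesis by (simp add: ee_1 ee_m1)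
  next
    assume "i = -1" then show ?thesis by (simp add: ee_1 ee_m1)
  qed
qed

lemma oo: "om + om^2 = -1" using om_sum by (simp add: algebra_simps eq_neg_iff_add_eq_0)

lemma om_diff: "om - om^2 = Complex 0 (sqrt 3)"
proof -
  have "om - om^2 = om - cnj om" by (simp add: om_sq)
  also have "\<dots> = Complex 0 (sqrt 3)" by (simp add: om_def complex_eq_iff)
  finally show ?thesis .
qed

lemma Bc_expl: "Bc i = (\<chi> (-1) + 1) + (ee (- i) + ee i) * (\<chi> (-1) * \<psi> 1 + \<psi> (-1))"
  unfolding Bc_def S3_sum by (simp add: ee_0 psi_zero algebra_simps)

lemma Bc_gen: assumes i: "i \<in> S3" shows "cmod (Bc i) \<le> 6"
proof -
  have a: "cmod (\<chi> (-1) + 1) \<le> 2"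
    using norm_triangle_ineq[of "\<chi> (-1::'a)" 1] chi_norm[of "-1::'a"] by simp
  have b: "cmod (ee (- i) + ee i) \<le> 2" using ee_pm[OF i] by simp
  have c: "cmod (\<chi> (-1) * \<psi> 1 + \<psi> (-1)) \<le> 2"
  proof -
    have "cmod (\<chi> (-1) * \<psi> 1 + \<psi> (-1)) \<le> cmod (\<chi> (-1) * \<psi> 1) + cmod (\<psi> (-1))"
      by (rule norm_triangle_ineq)
    also have "\<dots> \<le> 1 + 1" using chi_norm[of "-1::'a"] by (simp add: norm_mult psi_norm)
    finally show ?thesis by simp
  qed
  have "cmod (Bc i) \<le> cmod (\<chi> (-1) + 1) + cmod (ee (- i) + ee i) * cmod (\<chi> (-1) * \<psi> 1 + \<psi> (-1))"
    unfolding Bc_expl by (metis norm_mult norm_triangle_ineq)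
  also have "\<dots> \<le> 2 + 2 * 2" using a b c by (intro add_mono mult_mono) auto
  finally show ?thesis by simp
qed

lemma tr_one: "tr (1::'a) = of_nat m" by (simp add: abs_trace3_def)

lemma chi_m1_cases: "\<chi> (-1) = 1 \<or> \<chi> (-1) = -1"
  using trichotomy[of "-1::'a"] by (auto simp: chi_sqs chi_nonsq)

lemma minus_one_sqs: assumes ev: "even (card (sqs::'a set))" shows "(-1::'a) \<in> sqs"
proof -
  define n where "n = card (sqs::'a set)"
  have "(1::'a) \<in> sqs" by (auto simp: sqs_def intro: exI[of _ 1])
  then have n1: "n \<ge> 1" unfolding n_def by (metis One_nat_def Suc_leI card_gt_0_iff empty_iff finite)
  define p :: "'a poly" where "p = monom 1 n - 1"
  have pe: "poly p x = x^n - 1" for x by (simp add: p_def poly_monom)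
  have "coeff p n = 1" using n1 by (simp add: p_def coeff_monom)
  then have pnz: "p \<noteq> 0" by auto
  have dg: "degree p \<le> n"
    unfolding p_def by (rule order.trans[OF degree_diff_le_max]) (simp add: degree_monom_le)
  define R where "R = {x. poly p x = 0}"
  have sub: "sqs \<subseteq> R"
  proof
    fix y :: 'a assume "y \<in> sqs"
    then obtain c where c: "c^2 = y" "y \<noteq> 0" by (auto simp: sqs_def)
    then have c0: "c \<noteq> 0" by auto
    have "y^n = c^(2 * n)" using c by (simp add: power_mult)
    also have "2 * n = card (UNIV::'a set) - 1" using card_sqs n_def by simp
    also have "c^(card (UNIV::'a set) - 1) = 1" by (rule unit_pow[OF c0])
    finally show "y \<in> R" by (simp add: R_def pe)
  qed
  have "card R \<le> n" using card_poly_roots_bound[OF pnz] dg unfolding R_def by linarith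
  then have "card R \<le> card (sqs::'a set)" unfolding n_def .
  moreover have "card (sqs::'a set) \<le> card R" by (rule card_mono[OF _ sub]) simp
  ultimately have "card (sqs::'a set) = card R" by simp
  then have "sqs = R" using sub by (intro card_subset_eq) auto
  moreover have "(-1::'a) \<in> R" using ev by (simp add: R_def pe n_def)
  ultimately show ?thesis by simp
qed

lemma k_lt: fixes k c B :: real
  assumes "k \<ge> 0" "k^4 \<le> B" "B < c^4" "c \<ge> 0" shows "k < c"
proof (rule ccontr)
  assume "\<not> k < c"
  then have "c \<le> k" by simp
  then have "c^4 \<le> k^4" using assms by (intro power_mono) auto
  then show False using assms by linarith
qed

lemma key_ineq: assumes i: "i \<in> S3" and m4: "m \<ge> 4"
  shows "real (card (UNIV::'a set)) - cmod G * cmod (Bc i) - 2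
          - cmod (ee (- i) + ee i) * (cmod (Kl (-1) (-1)) + 1) > 9"
proof -
  define Q where "Q = real (card (UNIV::'a set))"
  define g where "g = cmod G"
  define k where "k = cmod (Kl (-1) (-1))"
  define bb where "bb = cmod (Bc i)"
  define cc where "cc = cmod (ee (- i) + ee i)"
  have Qe: "Q = 3^m" unfolding Q_def card3 by simp
  have g2: "g^2 = Q" unfolding g_def Q_def by (rule G_norm_sq)
  have k4: "k^4 \<le> 2 * Q^3" unfolding k_def Q_def by (rule Kl_bound)
  have g0: "g \<ge> 0" "k \<ge> 0" "bb \<ge> 0" unfolding g_def k_def bb_def by simp_all
  have bb6: "bb \<le> 6" unfolding bb_def by (rule Bc_gen[OF i])
  have ccv: "cc = (if i = 0 then 2 else 1)" unfolding cc_def by (rule ee_pm[OF i])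
  have "Q - g * bb - 2 - cc * (k + 1) > 9"
  proof (cases "m = 4")
    case True
    then have Q81: "Q = 81" using Qe by simp
    have g9: "g = 9"
    proof -
      have "(g - 9) * (g + 9) = 0" using g2 Q81 by (simp add: algebra_simps power2_eq_square)
      then show ?thesis using g0 by auto
    qed
    have "card (sqs::'a set) = 40" using card_sqs card3 True by simp
    then have "(-1::'a) \<in> sqs" by (intro minus_one_sqs) simp
    then have cm1: "\<chi> (-1::'a) = 1" by (simp add: chi_sqs)
    have "(of_nat m :: 'a) = 1 + 3" using True by simp
    then have t1: "tr (1::'a) = 1" using tr_one three_zero by simp
    have p1: "\<psi> 1 = om" by (simp add: psi_def t1 ee_1)
    have pm1: "\<psi> (-1) = om^2" by (simp add: psi_def tr_neg t1 ee_m1)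
    have kk: "k^4 \<le> 1062882" using k4 Q81 by simp
    show ?thesis
    proof (cases "i = 0")
      case True
      have "Bc i = 0" using True by (simp add: Bc_expl cm1 p1 pm1 ee_0 oo)
      then have "bb = 0" by (simp add: bb_def)
      moreover have "k < 34" by (rule k_lt[OF g0(2) kk]) simp_all
      ultimately show ?thesis using Q81 ccv True by simp
    next
      case False
      then have ee2: "ee (- i) + ee i = -1"
        using ee_sum_nz[OF i False] oo by simp
      have "Bc i = 3" by (simp add: Bc_expl cm1 p1 pm1 ee2 oo)
      then have "bb = 3" by (simp add: bb_def)
      moreover have "k < 42" by (rule k_lt[OF g0(2) kk]) simp_all
      ultimately show ?thesis using Q81 ccv False g9 by simp
    qed
  next
    case False
    show ?thesis
    proof (cases "m = 5")
      case True
      then have Q243: "Q = 243" using Qe by simp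
      have kk: "k^4 \<le> 28697814" using k4 Q243 by simp
      show ?thesis
      proof (cases "i = 0")
        case True
        have "(of_nat m :: 'a) = -1 + 3 + 3" using \<open>m = 5\<close> by simp
        then have t1: "tr (1::'a) = -1" using tr_one three_zero by simp
        have p1: "\<psi> 1 = om^2" by (simp add: psi_def t1 ee_m1)
        have pm1: "\<psi> (-1) = om" by (simp add: psi_def tr_neg t1 ee_1)
            have B0: "Bc i = (\<chi> (-1) + 1) + 2 * (\<chi> (-1) * om^2 + om)"
          using True by (simp add: Bc_expl p1 pm1 ee_0)
        have "bb^2 \<le> 12"
        proof (cases "\<chi> (-1::'a) = 1")
          case True
          then have "Bc i = 0" using B0 oo by (simp add: algebra_simps)
          then show ?thesis by (simp add: bb_def)
        next
          case False
          then have cm: "\<chi> (-1::'a) = -1" using chi_m1_cases by blast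
          have "Bc i = 2 * (om - om^2)" using B0 cm by (simp add: algebra_simps)
          also have "om - om^2 = Complex 0 (sqrt 3)" by (rule om_diff)
          finally have "Bc i = Complex 0 (2 * sqrt 3)" by (simp add: complex_eq_iff)
          then show ?thesis by (simp add: bb_def cmod_power2 power_mult_distrib)
        qed
        then have bb12: "bb^2 \<le> 12" .
        have "(g * bb)^2 = 243 * bb^2" using g2 Q243 by (simp add: power_mult_distrib)
        also have "\<dots> \<le> 243 * 12" using bb12 by simp
        finally have "(g * bb)^2 \<le> 54^2" by simp
        then have gb: "g * bb \<le> 54" by (rule power2_le_imp_le) simp_all
        have "k < 88" by (rule k_lt[OF g0(2) kk]) simp_all
        then show ?thesis using Q243 ccv True gb by simp
      next
        case False
        have "g^2 \<le> 16^2" using g2 Q243 by simp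
        then have "g \<le> 16" by (rule power2_le_imp_le) simp_all
        then have gb: "g * bb \<le> 16 * 6" using g0 bb6 by (intro mult_mono) simp_all
        have "k < 135" by (rule k_lt[OF g0(2) kk]) simp_all
        then show ?thesis using Q243 ccv False gb by simp
      qed
    next
      case False
      then have m6: "m \<ge> 6" using \<open>m \<noteq> 4\<close> m4 by simp
      have "(3::real)^6 \<le> 3^m" using m6 by (intro power_increasing) simp_all
      then have Q729: "Q \<ge> 729" using Qe by simp
      have g27: "g \<ge> 27"
      proof (rule ccontr)
        assume "\<not> g \<ge> 27"
        then have "g^2 < 27^2" using g0 by (intro power_strict_mono) simp_all
        then show False using g2 Q729 by simp
      qed
      have kQ: "k < Q / 4"
      proof (rule ccontr)
        assume "\<not> k < Q / 4"
        then have "(Q/4)^4 \<le> k^4" using Q729 by (intro power_mono) simp_all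
        then have A0: "(Q/4)^4 \<le> 2 * Q^3" using k4 by linarith
        have e4: "(Q/4)^4 = (Q * Q^3) / 256"
          by (simp add: power_divide power3_eq_cube power4_eq_xxxx mult.assoc)
        have "729 * Q^3 \<le> Q * Q^3" using Q729 by (intro mult_right_mono) simp_all
        moreover have "Q^3 > 0" using Q729 by simp
        ultimately show False using A0 e4 by linarith
      qed
      have "g * bb \<le> g * 6" using g0 bb6 by (intro mult_left_mono) simp_all
      moreover have "27 * g \<le> g * g" using g27 g0 by (intro mult_right_mono) simp_all
      moreover have "g * g = Q" using g2 by (simp add: power2_eq_square)
      moreover have "cc * (k + 1) \<le> 2 * (k + 1)" using ccv g0 by (intro mult_right_mono) auto
      ultimately have f1: "g * bb \<le> g * 6" and f2: "27 * g \<le> Q" and f3: "cc * (k + 1) \<le> 2 * (k + 1)"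
        by simp_all
      have "g * 6 \<le> (2/9) * Q" using f2 by simp
      then have "g * bb \<le> (2/9) * Q" using f1 by linarith
      moreover have "cc * (k + 1) < Q / 2 + 2" using f3 kQ by simp
      ultimately show ?thesis using Q729 by simp
    qed
  qed
  then show ?thesis unfolding Q_def g_def bb_def cc_def k_def .
qed

lemma main_i: assumes i: "i \<in> S3" and m4: "m \<ge> 4"
  shows "\<exists>x\<in>nonsquares. \<exists>b. b \<noteq> 0 \<and> x^3 - x = b^2 \<and> tr b = i"
  using exists_witness[OF i key_ineq[OF i m4]] by (simp add: Lf_def)

end

theorem lemma7:
  fixes m :: nat
  assumes "card (UNIV :: 'a::{field,finite} set) = 3 ^ m" and "m \<ge> 4"
  shows "\<forall>i\<in>{0,1,2::nat}. \<exists>x\<in>(nonsquares :: 'a set). \<exists>b::'a.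
           b \<noteq> 0 \<and> x ^ 3 - x = b ^ 2 \<and> abs_trace3 m b = of_nat i"
proof -
  have F: "fld3 TYPE('a) m" using assms by (unfold_locales) auto
  show ?thesis
  proof
    fix i :: nat assume i3: "i \<in> {0, 1, 2}"
    have S3e: "(fld3.S3 :: 'a set) = {0, 1, -1}" by (rule fld3.S3_def[OF F])
    have t2: "(2::'a) = -1" by (rule fld3.two_eq[OF F])
    have "(of_nat i :: 'a) \<in> fld3.S3"
    proof -
      have "i = 0 \<or> i = 1 \<or> i = 2" using i3 by simp
      then show ?thesis
      proof (elim disjE)
        assume "i = 0" then show ?thesis unfolding S3e by simp
      next
        assume "i = 1" then show ?thesis unfolding S3e by simp
      next
        assume "i = 2" then have "(of_nat i :: 'a) = -1" using t2 by simp
        then show ?thesis unfolding S3e by simp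
      qed
    qed
    from fld3.main_i[OF F this assms(2)]
    show "\<exists>x\<in>(nonsquares :: 'a set). \<exists>b::'a. b \<noteq> 0 \<and> x ^ 3 - x = b ^ 2 \<and> abs_trace3 m b = of_nat i" .
  qed
qed


end
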